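(* Let $R\ge1$, let $\varphi:[0,1]\to[0,\infty)$ be smooth with $\operatorname{supp}\varphi\subset(0,1)$, and let $f:(h\mathbb Z)^d\times[0,1]\to\mathbb R$ satisfy $$\operatorname{supp}f\subset\Big\{(hj,t): 1\le\Big|\frac{hj}{R}+\varphi(t)e_1\Big|\le4\Big\}\cap\big((h\mathbb Z)^d\times(0,1)\big).$$ Let $\phi_j(t)=\alpha\big|\frac{hj}{R}+\varphi(t)e_1\big|^2$ with $\alpha>0$. Then there exist $h_0>0$ and $C>1$ such that $$\frac1{h^2}\sqrt{\sinh\frac{2\alpha h^2}{R^2}}\,\sinh\Big(\frac{2\alpha h}{R\sqrt d}\Big)\|f\|_{L^2([0,1];\ell^2)}+\frac{2}{h^2}\sqrt{\sinh\frac{2\alpha h^2}{R^2}}\Big(h^d\int_0^1\sum_{j\in\mathbb Z^d}\sum_{k=1}^d\Big|\frac{f_{j+e_k}-f_{j-e_k}}{2}\Big|^2dt\Big)^{1/2}\le C\big\|e^{\phi}(\partial_t-\Delta_{\mathrm d})(e^{-\phi}f)\big\|_{L^2([0,1];\ell^2)},$$ whenever $0<h<h_0$ and $\alpha,h,R$ satisfy $$\alpha\le c_\varphi\frac1{h^4}\sinh\Big(\frac{2\alpha h^2}{R^2}\Big)\sinh^2\Big(\frac{2\alpha h}{R\sqrt d}\Big)$$ for a constant $c_\varphi=c_\varphi(d,\|\varphi'\|_\infty,\|\varphi''\|_\infty)$, together with either $\alpha\ge cR^2$ in the case $\frac{\alpha h}{R}\le\frac1{10}$, or $1\le C'\frac1{Rh}e^{(2-\varepsilon)\frac{\alpha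 h}{R\sqrt d}}$ in the case $\frac{\alpha h}{R}\ge\frac{\sqrt d}{2}$; here $c,C'>0$ are suitable constants and $\varepsilon>0$ is a small universal constant with $h/R<\varepsilon/\sqrt d$.
   Context: Lattice functions are indexed by $j\in\mathbb Z^d$ with $f_j(t)=f(hj,t)$; $\Delta_{\mathrm d}f_j:=h^{-2}\sum_{k=1}^d(f_{j+e_k}-2f_j+f_{j-e_k})$; $\|f\|_{L^2([0,1];\ell^2)}=(h^d\int_0^1\sum_j|f_j(t)|^2dt)^{1/2}$; $e_1$ is the first unit vector and $|\cdot|$ is the Euclidean norm. *)

theory Defs
  imports "HOL-Analysis.Analysis"
begin

text \<open>Lattice points of Z^d are functions nat => int vanishing at indices >= d
  (coordinate k of the paper corresponds to index k-1, so e_1 is index 0).\<close>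

definition lat :: "nat \<Rightarrow> (nat \<Rightarrow> int) set" where
  "lat d = {j. \<forall>k\<ge>d. j k = 0}"

definition unitv :: "nat \<Rightarrow> nat \<Rightarrow> int" where
  "unitv k = (\<lambda>i. if i = k then 1 else 0)"

definition shift_plus :: "(nat \<Rightarrow> int) \<Rightarrow> nat \<Rightarrow> (nat \<Rightarrow> int)" where
  "shift_plus j k = (\<lambda>i. j i + unitv k i)"

definition shift_minus :: "(nat \<Rightarrow> int) \<Rightarrow> nat \<Rightarrow> (nat \<Rightarrow> int)" where
  "shift_minus j k = (\<lambda>i. j i - unitv k i)"

definition pnorm :: "nat \<Rightarrow> real \<Rightarrow> real \<Rightarrow> (real \<Rightarrow> real) \<Rightarrow> (nat \<Rightarrow> int) \<Rightarrow> real \<Rightarrow> real" where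
  "pnorm d h R vphi j t =
     sqrt (\<Sum>i<d. (h * real_of_int (j i) / R + (if i = 0 then vphi t else 0))\<^sup>2)"

definition weight :: "nat \<Rightarrow> real \<Rightarrow> real \<Rightarrow> real \<Rightarrow> (real \<Rightarrow> real) \<Rightarrow> (nat \<Rightarrow> int) \<Rightarrow> real \<Rightarrow> real" where
  "weight d h R \<alpha> vphi j t = \<alpha> * (pnorm d h R vphi j t)\<^sup>2"

definition dlap :: "nat \<Rightarrow> real \<Rightarrow> ((nat \<Rightarrow> int) \<Rightarrow> real \<Rightarrow> real) \<Rightarrow> (nat \<Rightarrow> int) \<Rightarrow> real \<Rightarrow> real" where
  "dlap d h u j t = (\<Sum>k<d. u (shift_plus j k) t - 2 * u j t + u (shift_minus j k) t) / h\<^sup>2"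

definition conj_op :: "nat \<Rightarrow> real \<Rightarrow> real \<Rightarrow> real \<Rightarrow> (real \<Rightarrow> real)
    \<Rightarrow> ((nat \<Rightarrow> int) \<Rightarrow> real \<Rightarrow> real) \<Rightarrow> (nat \<Rightarrow> int) \<Rightarrow> real \<Rightarrow> real" where
  "conj_op d h R \<alpha> vphi f j t =
     (let u = (\<lambda>i s. exp (- weight d h R \<alpha> vphi i s) * f i s)
      in exp (weight d h R \<alpha> vphi j t) * (deriv (u j) t - dlap d h u j t))"

definition L2l2 :: "nat \<Rightarrow> real \<Rightarrow> ((nat \<Rightarrow> int) \<Rightarrow> real \<Rightarrow> real) \<Rightarrow> real" where
  "L2l2 d h F = sqrt (h ^ d * integral {0..1} (\<lambda>t. \<Sum>\<^sub>\<infinity>j\<in>lat d. (F j t)\<^sup>2))"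

definition cgrad :: "nat \<Rightarrow> real \<Rightarrow> ((nat \<Rightarrow> int) \<Rightarrow> real \<Rightarrow> real) \<Rightarrow> real" where
  "cgrad d h f = sqrt (h ^ d * integral {0..1}
      (\<lambda>t. \<Sum>\<^sub>\<infinity>j\<in>lat d. \<Sum>k<d. ((f (shift_plus j k) t - f (shift_minus j k) t) / 2)\<^sup>2))"

definition smooth_fun :: "(real \<Rightarrow> real) \<Rightarrow> bool" where
  "smooth_fun g = (\<forall>n x. ((deriv ^^ n) g) differentiable (at x))"

end

theory Submission
  imports Defs
begin


lemma sp_sm[simp]: "shift_minus (shift_plus j k) k = j" "shift_plus (shift_minus j k) k = j"
  by (auto simp: shift_plus_def shift_minus_def)

lemma sp_comm: "shift_plus (shift_plus j k) l = shift_plus (shift_plus j l) k"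
  "shift_minus (shift_plus j k) l = shift_plus (shift_minus j l) k"
  "shift_minus (shift_minus j k) l = shift_minus (shift_minus j l) k"
  by (auto simp: shift_plus_def shift_minus_def)

lemma sp_apply: "shift_plus j k i = j i + (if i = k then 1 else 0)"
  and sm_apply: "shift_minus j k i = j i - (if i = k then 1 else 0)"
  by (auto simp: shift_plus_def shift_minus_def unitv_def)

definition fs :: "((nat \<Rightarrow> int) \<Rightarrow> real) \<Rightarrow> bool" where
  "fs F = finite {j. F j \<noteq> 0}"

definition fsum :: "((nat \<Rightarrow> int) \<Rightarrow> real) \<Rightarrow> real" where
  "fsum F = sum F {j. F j \<noteq> 0}"

lemma fsum_sum: "finite S \<Longrightarrow> {j. F j \<noteq> 0} \<subseteq> S \<Longrightarrow> fsum F = sum F S"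
  unfolding fsum_def by (rule sum.mono_neutral_left) auto

lemma fs_sub: "finite S \<Longrightarrow> (\<And>j. F j \<noteq> 0 \<Longrightarrow> j \<in> S) \<Longrightarrow> fs F"
  unfolding fs_def by (rule finite_subset[of _ S]) auto

lemma fs_add[intro]: "fs F \<Longrightarrow> fs G \<Longrightarrow> fs (\<lambda>j. F j + G j)"
  unfolding fs_def by (rule finite_subset[of _ "{j. F j \<noteq> 0} \<union> {j. G j \<noteq> 0}"]) auto
lemma fs_diff[intro]: "fs F \<Longrightarrow> fs G \<Longrightarrow> fs (\<lambda>j. F j - G j)"
  unfolding fs_def by (rule finite_subset[of _ "{j. F j \<noteq> 0} \<union> {j. G j \<noteq> 0}"]) auto
lemma fs_multL[intro]: "fs F \<Longrightarrow> fs (\<lambda>j. F j * G j)"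
  unfolding fs_def by (rule finite_subset[of _ "{j. F j \<noteq> 0}"]) auto
lemma fs_multR[intro]: "fs G \<Longrightarrow> fs (\<lambda>j. F j * G j)"
  unfolding fs_def by (rule finite_subset[of _ "{j. G j \<noteq> 0}"]) auto
lemma fs_uminus[intro]: "fs F \<Longrightarrow> fs (\<lambda>j. - F j)"
  unfolding fs_def by simp
lemma fs_pow[intro]: "fs F \<Longrightarrow> fs (\<lambda>j. (F j)^2)"
  unfolding fs_def by simp
lemma fs_abs[intro]: "fs F \<Longrightarrow> fs (\<lambda>j. \<bar>F j\<bar>)"
  unfolding fs_def by simp
lemma fs_div[intro]: "fs F \<Longrightarrow> fs (\<lambda>j. F j / c)"
  unfolding fs_def by (rule finite_subset[of _ "{j. F j \<noteq> 0}"]) auto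
lemma fs_zero[intro]: "fs (\<lambda>j. 0)"
  unfolding fs_def by simp
lemma fs_sum[intro]: "finite K \<Longrightarrow> (\<And>k. k \<in> K \<Longrightarrow> fs (F k)) \<Longrightarrow> fs (\<lambda>j. \<Sum>k\<in>K. F k j)"
proof (induction K rule: finite_induct)
  case (insert x K) then show ?case by (simp add: fs_add)
qed (simp add: fs_zero)

lemma fs_sp[intro]: "fs F \<Longrightarrow> fs (\<lambda>j. F (shift_plus j k))"
  unfolding fs_def
  by (rule finite_subset[of _ "(\<lambda>j. shift_minus j k) ` {j. F j \<noteq> 0}"])
     (auto intro: image_eqI[where x="shift_plus _ k"])
lemma fs_sm[intro]: "fs F \<Longrightarrow> fs (\<lambda>j. F (shift_minus j k))"
  unfolding fs_def
  by (rule finite_subset[of _ "(\<lambda>j. shift_plus j k) ` {j. F j \<noteq> 0}"])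
     (auto intro: image_eqI[where x="shift_minus _ k"])

lemma fsum_add: "fs F \<Longrightarrow> fs G \<Longrightarrow> fsum (\<lambda>j. F j + G j) = fsum F + fsum G"
proof -
  assume a: "fs F" "fs G"
  let ?S = "{j. F j \<noteq> 0} \<union> {j. G j \<noteq> 0}"
  have fin: "finite ?S" using a by (simp add: fs_def)
  show ?thesis
    by (subst (1 2 3) fsum_sum[OF fin]) (auto simp: sum.distrib)
qed

lemma fsum_diff: "fs F \<Longrightarrow> fs G \<Longrightarrow> fsum (\<lambda>j. F j - G j) = fsum F - fsum G"
proof -
  assume a: "fs F" "fs G"
  let ?S = "{j. F j \<noteq> 0} \<union> {j. G j \<noteq> 0}"
  have fin: "finite ?S" using a by (simp add: fs_def)
  show ?thesis
    by (subst (1 2 3) fsum_sum[OF fin]) (auto simp: sum_subtractf)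
qed

lemma fsum_cmult: "fsum (\<lambda>j. c * F j) = c * fsum F"
proof (cases "c = 0")
  case False
  then show ?thesis unfolding fsum_def by (simp add: sum_distrib_left)
qed (simp add: fsum_def)

lemma fsum_uminus: "fsum (\<lambda>j. - F j) = - fsum F"
  using fsum_cmult[of "-1" F] by simp

lemma fsum_zero[simp]: "fsum (\<lambda>j. 0) = 0"
  by (simp add: fsum_def)

lemma fsum_sumk: "finite K \<Longrightarrow> (\<And>k. k \<in> K \<Longrightarrow> fs (F k)) \<Longrightarrow>
   fsum (\<lambda>j. \<Sum>k\<in>K. F k j) = (\<Sum>k\<in>K. fsum (F k))"
proof (induction K rule: finite_induct)
  case (insert x K) then show ?case by (simp add: fsum_add fs_sum)
qed simp

lemma fsum_mono: "fs F \<Longrightarrow> fs G \<Longrightarrow> (\<And>j. F j \<le> G j) \<Longrightarrow> fsum F \<le> fsum G"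
proof -
  assume a: "fs F" "fs G" "\<And>j. F j \<le> G j"
  let ?S = "{j. F j \<noteq> 0} \<union> {j. G j \<noteq> 0}"
  have fin: "finite ?S" using a by (simp add: fs_def)
  show ?thesis
    by (subst (1 2) fsum_sum[OF fin]) (auto intro: sum_mono a)
qed

lemma fsum_nonneg: "(\<And>j. 0 \<le> F j) \<Longrightarrow> 0 \<le> fsum F"
  unfolding fsum_def by (rule sum_nonneg) auto

lemma fsum_abs: "fs F \<Longrightarrow> \<bar>fsum F\<bar> \<le> fsum (\<lambda>j. \<bar>F j\<bar>)"
  unfolding fsum_def by (simp add: sum_abs)

lemma fsum_shift_p: "fs F \<Longrightarrow> fsum (\<lambda>j. F (shift_plus j k)) = fsum F"
proof -
  assume a: "fs F"
  have "fsum (\<lambda>j. F (shift_plus j k)) = sum (\<lambda>j. F (shift_plus j k)) {j. F (shift_plus j k) \<noteq> 0}"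
    by (simp add: fsum_def)
  also have "{j. F (shift_plus j k) \<noteq> 0} = (\<lambda>j. shift_minus j k) ` {j. F j \<noteq> 0}"
    by (auto intro: image_eqI[where x="shift_plus _ k"])
  also have "sum (\<lambda>j. F (shift_plus j k)) \<dots> = sum F {j. F j \<noteq> 0}"
    by (subst sum.reindex) (auto simp: inj_on_def  dest: arg_cong[where f="\<lambda>j. shift_plus j k"])
  finally show ?thesis by (simp add: fsum_def)
qed

lemma fsum_shift_m: "fs F \<Longrightarrow> fsum (\<lambda>j. F (shift_minus j k)) = fsum F"
proof -
  assume a: "fs F"
  have "fsum (\<lambda>j. F (shift_minus j k)) = sum (\<lambda>j. F (shift_minus j k)) {j. F (shift_minus j k) \<noteq> 0}"
    by (simp add: fsum_def)
  also have "{j. F (shift_minus j k) \<noteq> 0} = (\<lambda>j. shift_plus j k) ` {j. F j \<noteq> 0}"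
    by (auto intro: image_eqI[where x="shift_minus _ k"])
  also have "sum (\<lambda>j. F (shift_minus j k)) \<dots> = sum F {j. F j \<noteq> 0}"
    by (subst sum.reindex) (auto simp: inj_on_def  dest: arg_cong[where f="\<lambda>j. shift_minus j k"])
  finally show ?thesis by (simp add: fsum_def)
qed


locale carl =
  fixes d :: nat and h R \<alpha> :: real and \<phi> \<phi>1 \<phi>2 :: "real \<Rightarrow> real"
  assumes d1: "1 \<le> d" and hpos: "0 < h" and Rpos: "0 < R" and apos: "0 < \<alpha>"
    and der1: "\<And>t. (\<phi> has_real_derivative \<phi>1 t) (at t)"
    and der2: "\<And>t. (\<phi>1 has_real_derivative \<phi>2 t) (at t)"
begin

definition yv :: "nat \<Rightarrow> (nat \<Rightarrow> int) \<Rightarrow> real \<Rightarrow> real" where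
  "yv i j t = h * real_of_int (j i) / R + (if i = 0 then \<phi> t else 0)"
definition w :: "(nat \<Rightarrow> int) \<Rightarrow> real \<Rightarrow> real" where
  "w j t = \<alpha> * (\<Sum>i<d. (yv i j t)\<^sup>2)"
definition aa :: real where "aa = \<alpha> * h\<^sup>2 / R\<^sup>2"
definition bb :: "nat \<Rightarrow> (nat \<Rightarrow> int) \<Rightarrow> real \<Rightarrow> real" where
  "bb k j t = 2 * \<alpha> * h * yv k j t / R"
definition dk :: "nat \<Rightarrow> (nat \<Rightarrow> int) \<Rightarrow> real \<Rightarrow> real" where
  "dk k j t = aa + bb k j t"
definition pp :: "nat \<Rightarrow> (nat \<Rightarrow> int) \<Rightarrow> real \<Rightarrow> real" where
  "pp k j t = cosh (dk k j t)"
definition qq :: "nat \<Rightarrow> (nat \<Rightarrow> int) \<Rightarrow> real \<Rightarrow> real" where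
  "qq k j t = sinh (dk k j t)"
definition wd :: "(nat \<Rightarrow> int) \<Rightarrow> real \<Rightarrow> real" where
  "wd j t = 2 * \<alpha> * yv 0 j t * \<phi>1 t"
definition wdd :: "(nat \<Rightarrow> int) \<Rightarrow> real \<Rightarrow> real" where
  "wdd j t = 2 * \<alpha> * ((\<phi>1 t)\<^sup>2 + yv 0 j t * \<phi>2 t)"
definition cc :: "real \<Rightarrow> real" where
  "cc t = 2 * \<alpha> * h * \<phi>1 t / R"

lemma d0: "0 < d" using d1 by simp

lemma aa_pos: "0 < aa" using hpos Rpos apos by (simp add: aa_def)

lemma yv_sp: "yv i (shift_plus j k) t = yv i j t + (if i = k then h / R else 0)"
  by (cases "i = k") (simp_all add: yv_def sp_apply distrib_left add_divide_distrib)

lemma yv_sm: "yv i (shift_minus j k) t = yv i j t - (if i = k then h / R else 0)"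
  by (cases "i = k") (simp_all add: yv_def sm_apply right_diff_distrib diff_divide_distrib)

lemma w_sp: assumes "k < d" shows "w (shift_plus j k) t = w j t + dk k j t"
proof -
  have "(\<Sum>i<d. (yv i (shift_plus j k) t)\<^sup>2) =
        (\<Sum>i<d. (yv i j t)\<^sup>2 + (if i = k then 2 * yv k j t * (h/R) + (h/R)^2 else 0))"
    by (rule sum.cong) (auto simp: yv_sp power2_eq_square algebra_simps)
  also have "\<dots> = (\<Sum>i<d. (yv i j t)\<^sup>2) + (2 * yv k j t * (h/R) + (h/R)^2)"
    using assms by (simp add: sum.distrib)
  finally have "w (shift_plus j k) t = w j t + \<alpha> * (2 * yv k j t * (h/R) + (h/R)^2)"
    by (simp add: w_def distrib_left)
  also have "\<alpha> * (2 * yv k j t * (h/R) + (h/R)^2) = dk k j t"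
    unfolding dk_def aa_def bb_def by (simp add: power_divide distrib_left)
  finally show ?thesis .
qed

lemma w_sm: assumes "k < d" shows "w (shift_minus j k) t = w j t - dk k (shift_minus j k) t"
  using w_sp[OF assms, of "shift_minus j k" t] by simp

lemma bb_sp: "bb k (shift_plus j l) t = bb k j t + (if k = l then 2 * aa else 0)"
  using Rpos by (auto simp: bb_def yv_sp aa_def power2_eq_square field_simps)
lemma bb_sm: "bb k (shift_minus j l) t = bb k j t - (if k = l then 2 * aa else 0)"
  using Rpos by (auto simp: bb_def yv_sm aa_def power2_eq_square field_simps)
lemma dk_sp: "dk k (shift_plus j l) t = dk k j t + (if k = l then 2 * aa else 0)"
  by (simp add: dk_def bb_sp)
lemma dk_sm: "dk k (shift_minus j l) t = dk k j t - (if k = l then 2 * aa else 0)"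
  by (simp add: dk_def bb_sm)

lemma weight_eq: "weight d h R \<alpha> \<phi> j t = w j t"
proof -
  have "0 \<le> (\<Sum>i<d. (h * real_of_int (j i) / R + (if i = 0 then \<phi> t else 0))\<^sup>2)"
    by (rule sum_nonneg) simp
  then show ?thesis
    by (simp add: weight_def pnorm_def w_def yv_def)
qed

lemma pnorm_eq: "pnorm d h R \<phi> j t = sqrt (\<Sum>i<d. (yv i j t)\<^sup>2)"
  by (simp add: pnorm_def yv_def)

lemma yv_der: "((\<lambda>t. yv i j t) has_real_derivative (if i = 0 then \<phi>1 t else 0)) (at t)"
proof (cases "i = 0")
  case True
  have "((\<lambda>t. h * real_of_int (j i) / R + \<phi> t) has_real_derivative 0 + \<phi>1 t) (at t)"
    by (rule DERIV_add[OF DERIV_const der1])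
  then show ?thesis using True by (simp add: yv_def)
next
  case False
  then show ?thesis by (simp add: yv_def)
qed

lemma y0_der: "((\<lambda>t. yv 0 j t) has_real_derivative \<phi>1 t) (at t)"
  using yv_der[of 0 j t] by simp

lemma w_der: "((\<lambda>t. w j t) has_real_derivative wd j t) (at t)"
proof -
  have "((\<lambda>t. \<alpha> * (\<Sum>i<d. (yv i j t)\<^sup>2)) has_real_derivative
     \<alpha> * (\<Sum>i<d. 2 * yv i j t * (if i = 0 then \<phi>1 t else 0))) (at t)"
  proof (intro DERIV_cmult DERIV_sum)
    fix i assume "i \<in> {..<d}"
    have "((\<lambda>x. yv i j x * yv i j x) has_real_derivative
        yv i j t * (if i = 0 then \<phi>1 t else 0) + (if i = 0 then \<phi>1 t else 0) * yv i j t) (at t)"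
      by (rule DERIV_mult'[OF yv_der yv_der])
    then show "((\<lambda>x. (yv i j x)\<^sup>2) has_real_derivative 2 * yv i j t * (if i = 0 then \<phi>1 t else 0)) (at t)"
      by (simp add: power2_eq_square algebra_simps)
  qed
  moreover have "(\<Sum>i<d. 2 * yv i j t * (if i = 0 then \<phi>1 t else 0)) = 2 * yv 0 j t * \<phi>1 t"
    using d0 by (simp add: if_distrib cong: if_cong)
  ultimately show ?thesis by (simp add: w_def[abs_def] wd_def algebra_simps)
qed

lemma wd_der: "((\<lambda>t. wd j t) has_real_derivative wdd j t) (at t)"
proof -
  have "((\<lambda>t. (2 * \<alpha>) * (yv 0 j t * \<phi>1 t)) has_real_derivative
       (2 * \<alpha>) * (yv 0 j t * \<phi>2 t + \<phi>1 t * \<phi>1 t)) (at t)"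
    by (rule DERIV_cmult[OF DERIV_mult'[OF y0_der der2]])
  then show ?thesis by (simp add: wd_def wdd_def power2_eq_square algebra_simps)
qed

lemma dk_der: "((\<lambda>t. dk k j t) has_real_derivative (if k = 0 then cc t else 0)) (at t)"
proof -
  have "((\<lambda>t. aa + (2 * \<alpha> * h / R) * yv k j t) has_real_derivative
      0 + (2 * \<alpha> * h / R) * (if k = 0 then \<phi>1 t else 0)) (at t)"
    by (rule DERIV_add[OF DERIV_const DERIV_cmult[OF yv_der]])
  then show ?thesis by (cases "k = 0") (simp_all add: dk_def bb_def cc_def)
qed

lemma pp_der: "((\<lambda>t. pp k j t) has_real_derivative (if k = 0 then cc t * qq k j t else 0)) (at t)"
proof -
  have "((\<lambda>t. cosh (dk k j t)) has_real_derivative sinh (dk k j t) * (if k = 0 then cc t else 0)) (at t)"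
    by (rule DERIV_chain'[OF dk_der]) (rule has_field_derivative_cosh[OF DERIV_ident, simplified])
  then show ?thesis by (cases "k = 0") (simp_all add: pp_def qq_def mult.commute)
qed

lemma qq_der: "((\<lambda>t. qq k j t) has_real_derivative (if k = 0 then cc t * pp k j t else 0)) (at t)"
proof -
  have "((\<lambda>t. sinh (dk k j t)) has_real_derivative cosh (dk k j t) * (if k = 0 then cc t else 0)) (at t)"
    by (rule DERIV_chain'[OF dk_der]) (rule has_field_derivative_sinh[OF DERIV_ident, simplified])
  then show ?thesis by (cases "k = 0") (simp_all add: pp_def qq_def mult.commute)
qed

end

lemma trig: fixes x a A B C :: real shows
 "cosh x * (- sinh (x + 2*a) * A + sinh x * B) + cosh (x - 2*a) * (- sinh (x - 2*a) * B + sinh (x - 2*a - 2*a) * C)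
  - (- sinh x * (cosh (x + 2*a) * A + cosh x * B) + sinh (x - 2*a) * (cosh (x - 2*a) * B + cosh (x - 2*a - 2*a) * C))
  = sinh (2*a) * (2 * cosh (2*(x - a)) * B - A - C)"
proof -
  have s: "sinh y = (exp y - exp (-y))/2" "cosh y = (exp y + exp (-y))/2" for y :: real
    by (simp_all add: sinh_def cosh_def)
  define u where "u = exp x"
  define v where "v = exp a"
  have u0: "u > 0" "v > 0" by (auto simp: u_def v_def)
  have e2: "exp (a*2) = exp a * exp a" "exp (a*4) = exp a * (exp a * (exp a * exp a))" "exp (x*2) = exp x * exp x"
    by (simp_all add: exp_add[symmetric])
  have e: "exp (x + 2*a) = u * v * v" "exp (-(x+2*a)) = 1/(u * v * v)" "exp (x - 2*a) = u/(v * v)" "exp (-(x-2*a)) = v * v/u"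
    "exp (x - 2*a - 2*a) = u/(v * v * v * v)" "exp (-(x - 2*a - 2*a)) = v * v * v * v/u" "exp (2*a) = v * v" "exp(-(2*a)) = 1/(v * v)"
    "exp (2*(x-a)) = u * u/(v * v)" "exp (-(2*(x-a))) = v * v/(u * u)" "exp x = u" "exp (-x) = 1/u"
    by (simp_all add: u_def v_def exp_add exp_diff exp_minus field_simps e2)
  show ?thesis unfolding s e using u0 by (simp add: field_simps)
qed


context carl begin

definition Ts :: "nat \<Rightarrow> real \<Rightarrow> ((nat \<Rightarrow> int) \<Rightarrow> real) \<Rightarrow> (nat \<Rightarrow> int) \<Rightarrow> real" where
  "Ts k t F j = pp k j t * F (shift_plus j k) + pp k (shift_minus j k) t * F (shift_minus j k)"
definition Ta :: "nat \<Rightarrow> real \<Rightarrow> ((nat \<Rightarrow> int) \<Rightarrow> real) \<Rightarrow> (nat \<Rightarrow> int) \<Rightarrow> real" where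
  "Ta k t F j = - qq k j t * F (shift_plus j k) + qq k (shift_minus j k) t * F (shift_minus j k)"
definition ip :: "((nat \<Rightarrow> int) \<Rightarrow> real) \<Rightarrow> ((nat \<Rightarrow> int) \<Rightarrow> real) \<Rightarrow> real" where
  "ip F G = fsum (\<lambda>j. F j * G j)"

lemma fs_Ts[intro]: "fs F \<Longrightarrow> fs (Ts k t F)"
  unfolding Ts_def[abs_def] by (intro fs_add fs_multR fs_sp fs_sm)
lemma fs_Ta[intro]: "fs F \<Longrightarrow> fs (Ta k t F)"
  unfolding Ta_def[abs_def] by (intro fs_add fs_multR fs_sp fs_sm)

lemma ip_comm: "ip F G = ip G F"
  unfolding ip_def by (simp add: mult.commute)

lemma ip_Ts: assumes F: "fs F" and G: "fs G" shows "ip (Ts k t F) G = ip F (Ts k t G)"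
proof -
  define A where "A j = pp k j t * F (shift_plus j k) * G j" for j
  define B where "B j = pp k (shift_minus j k) t * F (shift_minus j k) * G j" for j
  define C where "C j = F j * (pp k j t * G (shift_plus j k))" for j
  define D where "D j = F j * (pp k (shift_minus j k) t * G (shift_minus j k))" for j
  have fA: "fs A" unfolding A_def using F by (intro fs_multL fs_multR fs_sp)
  have fB: "fs B" unfolding B_def using F G by (intro fs_multL fs_multR fs_sm)
  have fC: "fs C" unfolding C_def using F by (intro fs_multL)
  have fD: "fs D" unfolding D_def using F by (intro fs_multL)
  have "ip (Ts k t F) G = fsum (\<lambda>j. A j + B j)"
    unfolding ip_def Ts_def A_def B_def by (simp add: algebra_simps)
  also have "\<dots> = fsum A + fsum B" using fA fB by (rule fsum_add)
  also have "fsum A = fsum (\<lambda>j. D (shift_plus j k))" unfolding A_def D_def by (simp add: mult.commute mult.left_commute)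
  also have "\<dots> = fsum D" using fD by (rule fsum_shift_p)
  also have "fsum B = fsum (\<lambda>j. C (shift_minus j k))" unfolding B_def C_def by (simp add: mult.commute mult.left_commute)
  also have "\<dots> = fsum C" using fC by (rule fsum_shift_m)
  also have "fsum D + fsum C = fsum (\<lambda>j. C j + D j)" using fC fD by (simp add: fsum_add)
  also have "\<dots> = ip F (Ts k t G)" unfolding ip_def Ts_def C_def D_def by (simp add: algebra_simps)
  finally show ?thesis .
qed

lemma ip_Ta: assumes F: "fs F" and G: "fs G" shows "ip (Ta k t F) G = - ip F (Ta k t G)"
proof -
  define A where "A j = - qq k j t * F (shift_plus j k) * G j" for j
  define B where "B j = qq k (shift_minus j k) t * F (shift_minus j k) * G j" for j
  define C where "C j = F j * (- qq k j t * G (shift_plus j k))" for j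
  define D where "D j = F j * (qq k (shift_minus j k) t * G (shift_minus j k))" for j
  have fA: "fs A" unfolding A_def using F by (intro fs_multL fs_multR fs_sp)
  have fB: "fs B" unfolding B_def using F G by (intro fs_multL fs_multR fs_sm)
  have fC: "fs C" unfolding C_def using F by (intro fs_multL)
  have fD: "fs D" unfolding D_def using F by (intro fs_multL)
  have "ip (Ta k t F) G = fsum (\<lambda>j. A j + B j)"
    unfolding ip_def Ta_def A_def B_def by (simp add: algebra_simps)
  also have "\<dots> = fsum A + fsum B" using fA fB by (rule fsum_add)
  also have "fsum A = fsum (\<lambda>j. - D (shift_plus j k))" unfolding A_def D_def by (simp add: mult.commute mult.left_commute)
  also have "\<dots> = - fsum D" using fD by (simp add: fsum_uminus fsum_shift_p)
  also have "fsum B = fsum (\<lambda>j. - C (shift_minus j k))" unfolding B_def C_def by (simp add: mult.commute mult.left_commute)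
  also have "\<dots> = - fsum C" using fC by (simp add: fsum_uminus fsum_shift_m)
  also have "- fsum D + - fsum C = - fsum (\<lambda>j. C j + D j)" using fC fD by (simp add: fsum_add)
  also have "\<dots> = - ip F (Ta k t G)" unfolding ip_def Ta_def C_def D_def by (simp add: algebra_simps)
  finally show ?thesis .
qed

lemma comm_off: assumes "k \<noteq> l" shows "Ts k t (Ta l t F) j = Ta l t (Ts k t F) j"
proof -
  have "l \<noteq> k" using assms by simp
  then show ?thesis using assms
    by (simp add: Ts_def Ta_def pp_def qq_def dk_sp dk_sm sp_comm algebra_simps)
qed

lemma comm_diag: "Ts k t (Ta k t F) j - Ta k t (Ts k t F) j =
   sinh (2 * aa) * (2 * cosh (2 * bb k j t) * F j - F (shift_plus (shift_plus j k) k)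
     - F (shift_minus (shift_minus j k) k))"
proof -
  have b: "bb k j t = dk k j t - aa" by (simp add: dk_def)
  show ?thesis
    unfolding Ts_def Ta_def pp_def qq_def b
    using trig[of "dk k j t" aa "F (shift_plus (shift_plus j k) k)" "F j" "F (shift_minus (shift_minus j k) k)"]
    by (simp add: dk_sp dk_sm)
qed

end


lemmas fs_simps[simp] = fs_add fs_diff fs_multL fs_multR fs_uminus fs_pow fs_abs fs_div fs_zero fs_sp fs_sm

lemma fsum_divide: "fsum (\<lambda>j. F j / c) = fsum F / c"
  using fsum_cmult[of "1/c" F] by (simp add: divide_inverse mult.commute)

lemma fsum_add3: "fs F \<Longrightarrow> fs G \<Longrightarrow> fs H \<Longrightarrow> fsum (\<lambda>j. F j + G j + H j) = fsum F + fsum G + fsum H"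
  by (simp add: fsum_add)

context carl begin

declare fs_Ts[simp] fs_Ta[simp]

lemma main_diag: assumes F: "fs F" shows
  "ip F (\<lambda>j. Ts k t (Ta k t F) j - Ta k t (Ts k t F) j) =
   4 * sinh (2 * aa) * (fsum (\<lambda>j. (sinh (bb k j t))\<^sup>2 * (F j)\<^sup>2) +
                        fsum (\<lambda>j. ((F (shift_plus j k) - F (shift_minus j k)) / 2)\<^sup>2))"
proof -
  define P where "P = fsum (\<lambda>j. F (shift_plus j k) * F (shift_minus j k))"
  define s where "s j = (sinh (bb k j t))\<^sup>2" for j
  have h1: "fsum (\<lambda>j. F j * F (shift_plus (shift_plus j k) k)) = P"
  proof -
    have "fsum (\<lambda>j. F j * F (shift_plus (shift_plus j k) k)) =
          fsum (\<lambda>j. (\<lambda>j. F j * F (shift_plus (shift_plus j k) k)) (shift_minus j k))"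
      by (rule fsum_shift_m[symmetric]) (simp add: F)
    then show ?thesis by (simp add: P_def mult.commute)
  qed
  have h2: "fsum (\<lambda>j. F j * F (shift_minus (shift_minus j k) k)) = P"
  proof -
    have "fsum (\<lambda>j. F j * F (shift_minus (shift_minus j k) k)) =
          fsum (\<lambda>j. (\<lambda>j. F j * F (shift_minus (shift_minus j k) k)) (shift_plus j k))"
      by (rule fsum_shift_p[symmetric]) (simp add: F)
    then show ?thesis by (simp add: P_def)
  qed
  have h3: "fsum (\<lambda>j. (F (shift_plus j k))\<^sup>2) = fsum (\<lambda>j. (F j)\<^sup>2)"
    using fsum_shift_p[of "\<lambda>j. (F j)\<^sup>2" k] F by simp
  have h4: "fsum (\<lambda>j. (F (shift_minus j k))\<^sup>2) = fsum (\<lambda>j. (F j)\<^sup>2)"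
    using fsum_shift_m[of "\<lambda>j. (F j)\<^sup>2" k] F by simp
  have c2: "cosh (2 * bb k j t) = 1 + 2 * s j" for j
    by (simp add: s_def cosh_double cosh_square_eq)
  have "ip F (\<lambda>j. Ts k t (Ta k t F) j - Ta k t (Ts k t F) j) =
     fsum (\<lambda>j. sinh (2 * aa) * (2 * (F j)\<^sup>2 + 4 * (s j * (F j)\<^sup>2) - F j * F (shift_plus (shift_plus j k) k)
        - F j * F (shift_minus (shift_minus j k) k)))"
    unfolding ip_def comm_diag c2 by (simp add: algebra_simps power2_eq_square)
  also have "\<dots> = sinh (2 * aa) * (2 * fsum (\<lambda>j. (F j)\<^sup>2) + 4 * fsum (\<lambda>j. s j * (F j)\<^sup>2) - P - P)"
    using F by (simp add: fsum_cmult fsum_add fsum_diff h1 h2)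
  finally have e1: "ip F (\<lambda>j. Ts k t (Ta k t F) j - Ta k t (Ts k t F) j) =
     sinh (2 * aa) * (2 * fsum (\<lambda>j. (F j)\<^sup>2) + 4 * fsum (\<lambda>j. s j * (F j)\<^sup>2) - P - P)" .
  have "fsum (\<lambda>j. ((F (shift_plus j k) - F (shift_minus j k)) / 2)\<^sup>2) =
      fsum (\<lambda>j. (1/4) * ((F (shift_plus j k))\<^sup>2 + (F (shift_minus j k))\<^sup>2 - 2 * (F (shift_plus j k) * F (shift_minus j k))))"
    by (intro arg_cong[where f=fsum] ext) (simp add: power2_eq_square field_simps)
  also have "\<dots> = (1/4) * (2 * fsum (\<lambda>j. (F j)\<^sup>2) - 2 * P)"
    using F by (simp add: fsum_divide fsum_cmult fsum_add fsum_diff h3 h4 P_def)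
  finally have e2: "fsum (\<lambda>j. ((F (shift_plus j k) - F (shift_minus j k)) / 2)\<^sup>2) = (1/4) * (2 * fsum (\<lambda>j. (F j)\<^sup>2) - 2 * P)" .
  show ?thesis unfolding e1 e2 unfolding s_def by (simp add: algebra_simps)
qed

end


context carl begin

definition TS :: "real \<Rightarrow> ((nat \<Rightarrow> int) \<Rightarrow> real) \<Rightarrow> (nat \<Rightarrow> int) \<Rightarrow> real" where
  "TS t F j = (\<Sum>k<d. Ts k t F j)"
definition TA :: "real \<Rightarrow> ((nat \<Rightarrow> int) \<Rightarrow> real) \<Rightarrow> (nat \<Rightarrow> int) \<Rightarrow> real" where
  "TA t F j = (\<Sum>k<d. Ta k t F j)"

lemma fs_TS[simp]: "fs F \<Longrightarrow> fs (TS t F)"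
  unfolding TS_def[abs_def] by (intro fs_sum) auto
lemma fs_TA[simp]: "fs F \<Longrightarrow> fs (TA t F)"
  unfolding TA_def[abs_def] by (intro fs_sum) auto

lemma ip_sumL: "finite K \<Longrightarrow> (\<And>k. k \<in> K \<Longrightarrow> fs (X k)) \<Longrightarrow>
    ip (\<lambda>j. \<Sum>k\<in>K. X k j) G = (\<Sum>k\<in>K. ip (X k) G)"
  unfolding ip_def sum_distrib_right by (rule fsum_sumk) auto

lemma ip_sumR: "finite K \<Longrightarrow> (\<And>k. k \<in> K \<Longrightarrow> fs (X k)) \<Longrightarrow>
    ip G (\<lambda>j. \<Sum>k\<in>K. X k j) = (\<Sum>k\<in>K. ip G (X k))"
  using ip_sumL[of K X G] by (simp add: ip_comm)

lemma ip_diffR: "fs F \<Longrightarrow> ip F (\<lambda>j. X j - Y j) = ip F X - ip F Y"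
  unfolding ip_def by (simp add: right_diff_distrib fsum_diff)

lemma comm_ip: assumes F: "fs F" shows
  "2 * ip (Ts k t F) (Ta l t F) = ip F (\<lambda>j. Ts k t (Ta l t F) j - Ta l t (Ts k t F) j)"
proof -
  have 1: "ip (Ts k t F) (Ta l t F) = ip F (Ts k t (Ta l t F))" using F by (simp add: ip_Ts)
  have 2: "ip (Ts k t F) (Ta l t F) = - ip F (Ta l t (Ts k t F))"
    using F by (simp add: ip_comm[of "Ts k t F"] ip_Ta)
  show ?thesis using 1 2 F by (simp add: ip_diffR)
qed

lemma ip_TS_TA: assumes F: "fs F" shows
  "2 * ip (TS t F) (TA t F) = (\<Sum>k<d. ip F (\<lambda>j. Ts k t (Ta k t F) j - Ta k t (Ts k t F) j))"
proof -
  have "2 * ip (TS t F) (TA t F) = (\<Sum>k<d. \<Sum>l<d. 2 * ip (Ts k t F) (Ta l t F))"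
    unfolding TS_def[abs_def] TA_def[abs_def] using F
    by (simp add: ip_sumL ip_sumR sum_distrib_left)
  also have "\<dots> = (\<Sum>k<d. \<Sum>l<d. if l = k then ip F (\<lambda>j. Ts k t (Ta k t F) j - Ta k t (Ts k t F) j) else 0)"
  proof (intro sum.cong refl)
    fix k l assume "k \<in> {..<d}" "l \<in> {..<d}"
    show "2 * ip (Ts k t F) (Ta l t F) = (if l = k then ip F (\<lambda>j. Ts k t (Ta k t F) j - Ta k t (Ts k t F) j) else 0)"
    proof (cases "l = k")
      case False
      then have "k \<noteq> l" by simp
      then show ?thesis using comm_ip[OF F, of k t l] False by (simp add: comm_off ip_def)
    qed (simp add: comm_ip[OF F])
  qed
  also have "\<dots> = (\<Sum>k<d. ip F (\<lambda>j. Ts k t (Ta k t F) j - Ta k t (Ts k t F) j))"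
    by simp
  finally show ?thesis .
qed

end


context carl begin
lemma ip_TS: "fs F \<Longrightarrow> fs G \<Longrightarrow> ip (TS t F) G = ip F (TS t G)"
  unfolding TS_def[abs_def] by (simp add: ip_sumL ip_sumR ip_Ts)
lemma sum_if0: "(\<Sum>k<d. if k = 0 then g k else 0) = g 0"
  using d0 by simp
lemma sum_if0': "(\<Sum>k<d. A k + (if k = 0 then g k else 0)) = (\<Sum>k<d. A k) + g 0"
  using d0 by (simp add: sum.distrib)
end

locale carl2 = carl +
  fixes f fd :: "(nat \<Rightarrow> int) \<Rightarrow> real \<Rightarrow> real"
  assumes f_der: "\<And>j t. (f j has_real_derivative fd j t) (at t)"
    and fd_cont: "\<And>j. continuous_on UNIV (fd j)"
    and U_fin: "finite {j. \<exists>t. f j t \<noteq> 0}"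
    and f0: "\<And>j. f j 0 = 0" and f1: "\<And>j. f j 1 = 0"
begin

definition U where "U = {j. \<exists>t. f j t \<noteq> 0}"

lemma finU: "finite U" using U_fin by (simp add: U_def)

lemma fU: "f j t \<noteq> 0 \<Longrightarrow> j \<in> U" by (auto simp: U_def)

lemma fd_U: assumes "fd j t \<noteq> 0" shows "j \<in> U"
proof (rule ccontr)
  assume "j \<notin> U"
  then have "f j = (\<lambda>_. 0)" by (auto simp: U_def)
  then have "(f j has_real_derivative 0) (at t)" by simp
  then have "fd j t = 0" using f_der[of j t] DERIV_unique by blast
  then show False using assms by simp
qed

lemma fs_f[simp]: "fs (\<lambda>j. f j t)" by (rule fs_sub[OF finU]) (rule fU)
lemma fs_fd[simp]: "fs (\<lambda>j. fd j t)" by (rule fs_sub[OF finU]) (rule fd_U)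

definition sig where "sig j t = 2 * real d / h\<^sup>2 - wd j t"

definition SS where "SS t j = sig j t * f j t - TS t (\<lambda>i. f i t) j / h\<^sup>2"
definition AA where "AA t j = fd j t - TA t (\<lambda>i. f i t) j / h\<^sup>2"
definition Lf where "Lf j t = fd j t - wd j t * f j t -
   (\<Sum>k<d. exp (- dk k j t) * f (shift_plus j k) t - 2 * f j t
           + exp (dk k (shift_minus j k) t) * f (shift_minus j k) t) / h\<^sup>2"

lemma L_split: "Lf j t = SS t j + AA t j"
proof -
  have e: "exp (- dk k j t) * f (shift_plus j k) t - 2 * f j t
           + exp (dk k (shift_minus j k) t) * f (shift_minus j k) t
      = ((pp k j t * f (shift_plus j k) t + pp k (shift_minus j k) t * f (shift_minus j k) t)
            + (- qq k j t * f (shift_plus j k) t + qq k (shift_minus j k) t * f (shift_minus j k) t))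
        - 2 * f j t" for k
    by (simp add: pp_def qq_def cosh_minus_sinh[symmetric] cosh_plus_sinh[symmetric] algebra_simps)
  have "(\<Sum>k<d. exp (- dk k j t) * f (shift_plus j k) t - 2 * f j t
           + exp (dk k (shift_minus j k) t) * f (shift_minus j k) t)
      = TS t (\<lambda>i. f i t) j + TA t (\<lambda>i. f i t) j - real d * (2 * f j t)"
    unfolding e TS_def TA_def Ts_def Ta_def by (simp add: sum_subtractf sum.distrib)
  note S = this
  show ?thesis
    unfolding Lf_def SS_def AA_def sig_def S
    using hpos by (simp add: field_simps)
qed

definition TSd where "TSd t F j = cc t * (qq 0 j t * F (shift_plus j 0) + qq 0 (shift_minus j 0) t * F (shift_minus j 0))"

lemma fs_TSd[simp]: "fs F \<Longrightarrow> fs (TSd t F)"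
  unfolding TSd_def[abs_def] by simp

lemma TS_der: "((\<lambda>t. TS t (\<lambda>i. f i t) j) has_real_derivative
    TSd t (\<lambda>i. f i t) j + TS t (\<lambda>i. fd i t) j) (at t)"
proof -
  define E1 where "E1 = (\<Sum>k<d. (pp k j t * fd (shift_plus j k) t + (if k = 0 then cc t * qq k j t else 0) * f (shift_plus j k) t)
       + (pp k (shift_minus j k) t * fd (shift_minus j k) t + (if k = 0 then cc t * qq k (shift_minus j k) t else 0) * f (shift_minus j k) t))"
  have D: "((\<lambda>t. \<Sum>k<d. pp k j t * f (shift_plus j k) t + pp k (shift_minus j k) t * f (shift_minus j k) t)
    has_real_derivative E1) (at t)"
    unfolding E1_def by (intro DERIV_sum DERIV_add DERIV_mult' pp_der f_der)
  have c: "E1 = (\<Sum>k<d. (pp k j t * fd (shift_plus j k) t + pp k (shift_minus j k) t * fd (shift_minus j k) t)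
       + (if k = 0 then cc t * qq 0 j t * f (shift_plus j 0) t + cc t * qq 0 (shift_minus j 0) t * f (shift_minus j 0) t else 0))"
    unfolding E1_def by (intro sum.cong refl) (simp add: algebra_simps)
  have eq: "E1 = TSd t (\<lambda>i. f i t) j + TS t (\<lambda>i. fd i t) j"
    unfolding c sum_if0' TS_def Ts_def TSd_def by (simp add: algebra_simps)
  have fneq: "(\<lambda>t. TS t (\<lambda>i. f i t) j) = (\<lambda>t. \<Sum>k<d. pp k j t * f (shift_plus j k) t + pp k (shift_minus j k) t * f (shift_minus j k) t)"
    by (simp add: TS_def Ts_def)
  show ?thesis using D unfolding fneq eq .
qed

end


context carl2 begin

lemma fs_sigf[simp]: "fs (\<lambda>j. X j * f j t)" by (rule fs_multR) simp

lemma ipU: "(\<And>j. X j * Y j \<noteq> 0 \<Longrightarrow> j \<in> U) \<Longrightarrow> ip X Y = (\<Sum>j\<in>U. X j * Y j)"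
  unfolding ip_def by (rule fsum_sum[OF finU]) auto

lemma sig_der: "((\<lambda>t. sig j t) has_real_derivative - wdd j t) (at t)"
  unfolding sig_def using DERIV_diff[OF DERIV_const wd_der, of "2 * real d / h\<^sup>2" j t] by simp

definition Gfun where "Gfun t = ip (\<lambda>j. sig j t * f j t) (\<lambda>j. f j t) - ip (TS t (\<lambda>j. f j t)) (\<lambda>j. f j t) / h\<^sup>2"
definition Gd where "Gd t = - ip (\<lambda>j. wdd j t * f j t) (\<lambda>j. f j t) + 2 * ip (\<lambda>j. sig j t * f j t) (\<lambda>j. fd j t)
   - 2 / h\<^sup>2 * ip (TS t (\<lambda>j. f j t)) (\<lambda>j. fd j t) - ip (TSd t (\<lambda>j. f j t)) (\<lambda>j. f j t) / h\<^sup>2"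

lemma G_der: "(Gfun has_real_derivative Gd t) (at t)"
proof -
  have Gs: "Gfun = (\<lambda>t. \<Sum>j\<in>U. sig j t * f j t * f j t - TS t (\<lambda>i. f i t) j * f j t / h\<^sup>2)"
  proof
    fix t
    have 1: "ip (\<lambda>j. sig j t * f j t) (\<lambda>j. f j t) = (\<Sum>j\<in>U. sig j t * f j t * f j t)"
      by (rule ipU) (auto intro: fU)
    have 2: "ip (TS t (\<lambda>j. f j t)) (\<lambda>j. f j t) = (\<Sum>j\<in>U. TS t (\<lambda>i. f i t) j * f j t)"
      by (rule ipU) (auto intro: fU)
    show "Gfun t = (\<Sum>j\<in>U. sig j t * f j t * f j t - TS t (\<lambda>i. f i t) j * f j t / h\<^sup>2)"
      unfolding Gfun_def 1 2 by (simp add: sum_subtractf sum_divide_distrib)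
  qed
  have D: "((\<lambda>t. \<Sum>j\<in>U. sig j t * f j t * f j t - TS t (\<lambda>i. f i t) j * f j t / h\<^sup>2) has_real_derivative
     (\<Sum>j\<in>U. ((- wdd j t) * f j t + fd j t * sig j t) * f j t + fd j t * (sig j t * f j t)
        - ((TSd t (\<lambda>i. f i t) j + TS t (\<lambda>i. fd i t) j) * f j t + fd j t * TS t (\<lambda>i. f i t) j) / h\<^sup>2)) (at t)"
    by (intro DERIV_sum DERIV_diff DERIV_mult DERIV_cdivide sig_der f_der TS_der)
  have a1: "ip (\<lambda>j. wdd j t * f j t) (\<lambda>j. f j t) = (\<Sum>j\<in>U. wdd j t * f j t * f j t)"
    by (rule ipU) (auto intro: fU)
  have a2: "ip (\<lambda>j. sig j t * f j t) (\<lambda>j. fd j t) = (\<Sum>j\<in>U. sig j t * f j t * fd j t)"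
    by (rule ipU) (auto intro: fU)
  have a3: "ip (TS t (\<lambda>j. f j t)) (\<lambda>j. fd j t) = (\<Sum>j\<in>U. TS t (\<lambda>i. f i t) j * fd j t)"
    by (rule ipU) (auto intro: fd_U)
  have a4: "ip (TSd t (\<lambda>j. f j t)) (\<lambda>j. f j t) = (\<Sum>j\<in>U. TSd t (\<lambda>i. f i t) j * f j t)"
    by (rule ipU) (auto intro: fU)
  have a5: "ip (TS t (\<lambda>j. fd j t)) (\<lambda>j. f j t) = (\<Sum>j\<in>U. TS t (\<lambda>i. fd i t) j * f j t)"
    by (rule ipU) (auto intro: fU)
  have sym: "ip (TS t (\<lambda>j. fd j t)) (\<lambda>j. f j t) = ip (TS t (\<lambda>j. f j t)) (\<lambda>j. fd j t)"
    by (simp add: ip_TS ip_comm[of "\<lambda>j. fd j t"])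
  have eq: "(\<Sum>j\<in>U. ((- wdd j t) * f j t + fd j t * sig j t) * f j t + fd j t * (sig j t * f j t)
        - ((TSd t (\<lambda>i. f i t) j + TS t (\<lambda>i. fd i t) j) * f j t + fd j t * TS t (\<lambda>i. f i t) j) / h\<^sup>2)
      = - (\<Sum>j\<in>U. wdd j t * f j t * f j t) + 2 * (\<Sum>j\<in>U. sig j t * f j t * fd j t)
        - ((\<Sum>j\<in>U. TSd t (\<lambda>i. f i t) j * f j t) + (\<Sum>j\<in>U. TS t (\<lambda>i. fd i t) j * f j t)
           + (\<Sum>j\<in>U. TS t (\<lambda>i. f i t) j * fd j t)) / h\<^sup>2"
    by (simp add: sum.distrib sum_subtractf sum_divide_distrib[symmetric] sum_distrib_left
          sum_negf algebra_simps)
  have "Gd t = - (\<Sum>j\<in>U. wdd j t * f j t * f j t) + 2 * (\<Sum>j\<in>U. sig j t * f j t * fd j t)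
        - ((\<Sum>j\<in>U. TSd t (\<lambda>i. f i t) j * f j t) + (\<Sum>j\<in>U. TS t (\<lambda>i. fd i t) j * f j t)
           + (\<Sum>j\<in>U. TS t (\<lambda>i. f i t) j * fd j t)) / h\<^sup>2"
    unfolding Gd_def a1 a2 a4 a5[symmetric] sym a3 by (simp add: field_simps add_divide_distrib)
  then show ?thesis using D unfolding Gs eq by simp
qed

end


context carl2 begin

definition Xq where "Xq t = fsum (\<lambda>j. qq 0 j t * f j t * f (shift_plus j 0) t)"
definition Err where "Err t = ip (\<lambda>j. wdd j t * f j t) (\<lambda>j. f j t) + 4 * cc t / h\<^sup>2 * Xq t"
definition Main where "Main t = (\<Sum>k<d. ip (\<lambda>j. f j t)
    (\<lambda>j. Ts k t (Ta k t (\<lambda>i. f i t)) j - Ta k t (Ts k t (\<lambda>i. f i t)) j)) / h ^ 4"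

lemma sig_sp: "sig (shift_plus j k) t - sig j t = - (if k = 0 then cc t else 0)"
  unfolding sig_def wd_def cc_def yv_sp by (simp add: algebra_simps)

lemma ip_sig_Ta: "ip (\<lambda>j. sig j t * f j t) (Ta k t (\<lambda>i. f i t)) = - (if k = 0 then cc t * Xq t else 0)"
proof -
  define A where "A j = - (sig j t * f j t * qq k j t * f (shift_plus j k) t)" for j
  define B where "B j = sig j t * f j t * (qq k (shift_minus j k) t * f (shift_minus j k) t)" for j
  have fA: "fs A" unfolding A_def by (rule fs_uminus, rule fs_multR, rule fs_sp[OF fs_f])
  have fB: "fs B" unfolding B_def by (intro fs_multR fs_sm) simp
  have "ip (\<lambda>j. sig j t * f j t) (Ta k t (\<lambda>i. f i t)) = fsum (\<lambda>j. A j + B j)"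
    unfolding ip_def Ta_def A_def B_def by (simp add: algebra_simps)
  also have "\<dots> = fsum A + fsum (\<lambda>j. B (shift_plus j k))" using fA fB by (simp add: fsum_add fsum_shift_p)
  also have "\<dots> = fsum (\<lambda>j. A j + B (shift_plus j k))" using fA fB by (simp add: fsum_add)
  also have "\<dots> = fsum (\<lambda>j. (sig (shift_plus j k) t - sig j t) * (qq k j t * f j t * f (shift_plus j k) t))"
    unfolding A_def B_def by (intro arg_cong[where f=fsum] ext) (simp add: algebra_simps)
  also have "\<dots> = - (if k = 0 then cc t * Xq t else 0)"
    unfolding sig_sp by (cases "k = 0") (simp_all add: fsum_cmult Xq_def fsum_uminus mult.assoc)
  finally show ?thesis .
qed

lemma ip_sig_TA: "ip (\<lambda>j. sig j t * f j t) (TA t (\<lambda>i. f i t)) = - cc t * Xq t"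
proof -
  have "ip (\<lambda>j. sig j t * f j t) (TA t (\<lambda>i. f i t)) = (\<Sum>k<d. ip (\<lambda>j. sig j t * f j t) (Ta k t (\<lambda>i. f i t)))"
    unfolding TA_def[abs_def] by (rule ip_sumR) auto
  also have "\<dots> = (\<Sum>k<d. if k = 0 then - (cc t * Xq t) else 0)"
    by (intro sum.cong refl) (simp add: ip_sig_Ta)
  also have "\<dots> = - cc t * Xq t" by (simp add: sum_if0)
  finally show ?thesis .
qed

lemma ip_TSd: "ip (TSd t (\<lambda>i. f i t)) (\<lambda>i. f i t) = 2 * cc t * Xq t"
proof -
  define A where "A j = qq 0 j t * f j t * f (shift_plus j 0) t" for j
  define B where "B j = qq 0 (shift_minus j 0) t * f (shift_minus j 0) t * f j t" for j
  have fA: "fs A" unfolding A_def by (intro fs_multR fs_sp) simp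
  have fB: "fs B" unfolding B_def by (intro fs_multR) simp
  have "ip (TSd t (\<lambda>i. f i t)) (\<lambda>i. f i t) = cc t * fsum (\<lambda>j. A j + B j)"
    unfolding ip_def TSd_def A_def B_def by (simp add: algebra_simps fsum_cmult[symmetric])
  also have "\<dots> = cc t * (fsum A + fsum (\<lambda>j. B (shift_plus j 0)))" using fA fB by (simp add: fsum_add fsum_shift_p)
  also have "fsum (\<lambda>j. B (shift_plus j 0)) = fsum A" unfolding A_def B_def by (simp add: mult.commute)
  finally show ?thesis by (simp add: Xq_def A_def[abs_def])
qed

lemma ident: "2 * ip (SS t) (AA t) = Gd t + Err t + Main t"
proof -
  let ?F = "\<lambda>i. f i t"
  have "ip (SS t) (AA t) = fsum (\<lambda>j. sig j t * f j t * fd j t - sig j t * f j t * TA t ?F j / h\<^sup>2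
     - TS t ?F j * fd j t / h\<^sup>2 + TS t ?F j * TA t ?F j / h ^ 4)"
    unfolding ip_def SS_def AA_def using hpos by (intro arg_cong[where f=fsum] ext) (simp add: field_simps power2_eq_square power4_eq_xxxx)
  also have "\<dots> = ip (\<lambda>j. sig j t * f j t) (\<lambda>j. fd j t) - ip (\<lambda>j. sig j t * f j t) (TA t ?F) / h\<^sup>2
     - ip (TS t ?F) (\<lambda>j. fd j t) / h\<^sup>2 + ip (TS t ?F) (TA t ?F) / h ^ 4"
    unfolding ip_def by (simp add: fsum_add fsum_diff fsum_divide)
  finally have 1: "ip (SS t) (AA t) = \<dots>" .
  have 2: "2 * ip (TS t ?F) (TA t ?F) = (\<Sum>k<d. ip ?F (\<lambda>j. Ts k t (Ta k t ?F) j - Ta k t (Ts k t ?F) j))"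
    by (rule ip_TS_TA) simp
  show ?thesis
    unfolding 1 Gd_def Err_def Main_def ip_sig_TA ip_TSd 2[symmetric]
    by (simp add: field_simps)
qed

lemma L_ge: "2 * ip (SS t) (AA t) \<le> fsum (\<lambda>j. (Lf j t)\<^sup>2)"
proof -
  have fS: "fs (SS t)" unfolding SS_def[abs_def] by simp
  have fA: "fs (AA t)" unfolding AA_def[abs_def] by simp
  have "fsum (\<lambda>j. (Lf j t)\<^sup>2) = fsum (\<lambda>j. (SS t j)\<^sup>2 + (AA t j)\<^sup>2 + 2 * (SS t j * AA t j))"
    unfolding L_split by (simp add: power2_eq_square algebra_simps)
  also have "\<dots> = fsum (\<lambda>j. (SS t j)\<^sup>2) + fsum (\<lambda>j. (AA t j)\<^sup>2) + 2 * ip (SS t) (AA t)"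
    using fS fA by (simp add: fsum_add fsum_cmult ip_def)
  finally show ?thesis using fsum_nonneg[of "\<lambda>j. (SS t j)\<^sup>2"] fsum_nonneg[of "\<lambda>j. (AA t j)\<^sup>2"] by simp
qed

end


locale carl3 = carl2 +
  fixes P1 P2 cphi :: real
  assumes supp: "\<And>j t. f j t \<noteq> 0 \<Longrightarrow> 0 \<le> t \<and> t \<le> 1 \<and> 1 \<le> pnorm d h R \<phi> j t \<and> pnorm d h R \<phi> j t \<le> 4"
    and P1: "\<And>t. 0 \<le> t \<Longrightarrow> t \<le> 1 \<Longrightarrow> \<bar>\<phi>1 t\<bar> \<le> P1"
    and P2: "\<And>t. 0 \<le> t \<Longrightarrow> t \<le> 1 \<Longrightarrow> \<bar>\<phi>2 t\<bar> \<le> P2"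
    and P1nn: "0 \<le> P1" and P2nn: "0 \<le> P2"
    and cphi_pos: "0 < cphi" and cphi_small: "cphi * (2 * (P1\<^sup>2 + 4 * P2) + 32 * (P1 + 1)\<^sup>2) \<le> 1"
    and acond: "\<alpha> \<le> cphi * (1 / h ^ 4) * sinh (2 * \<alpha> * h\<^sup>2 / R\<^sup>2) * (sinh (2 * \<alpha> * h / (R * sqrt d)))\<^sup>2"
begin

definition Bc where "Bc = 2 * \<alpha> * h / (R * sqrt d)"
definition s2 where "s2 = sinh (2 * aa)"
definition Ys where "Ys t = fsum (\<lambda>j. (f j t)\<^sup>2)"
definition Sk where "Sk t = (\<Sum>k<d. fsum (\<lambda>j. (sinh (bb k j t))\<^sup>2 * (f j t)\<^sup>2))"
definition Qg where "Qg t = (\<Sum>k<d. fsum (\<lambda>j. ((f (shift_plus j k) t - f (shift_minus j k) t) / 2)\<^sup>2))"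

lemma s2_eq: "s2 = sinh (2 * \<alpha> * h\<^sup>2 / R\<^sup>2)" by (simp add: s2_def aa_def)
lemma s2_pos: "0 < s2" using aa_pos by (simp add: s2_def)
lemma x_le_sinh: assumes x: "0 \<le> (x::real)" shows "x \<le> sinh x"
proof -
  have "(\<lambda>x. sinh x - x) 0 \<le> (\<lambda>x. sinh x - x) x"
  proof (rule DERIV_nonneg_imp_nondecreasing[OF x])
    fix y :: real
    have "((\<lambda>x. sinh x - x) has_real_derivative cosh y - 1) (at y)"
      by (intro derivative_eq_intros) auto
    moreover have "cosh y - 1 \<ge> 0" using cosh_real_ge_1[of y] by simp
    ultimately show "\<exists>z. ((\<lambda>x. sinh x - x) has_real_derivative z) (at y) \<and> 0 \<le> z" by blast
  qed
  then show ?thesis by simp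
qed

lemma s2_ge: "2 * aa \<le> s2"
  using x_le_sinh[of "2 * aa"] aa_pos unfolding s2_def by simp

lemma Main_eq: "Main t = 4 * s2 / h ^ 4 * (Sk t + Qg t)"
  unfolding Main_def Sk_def Qg_def s2_def
  by (simp add: main_diag sum.distrib sum_distrib_left field_simps)

lemma fs_Fp[simp]: "fs (\<lambda>j. f (shift_plus j k) t)" by (rule fs_sp[OF fs_f])
lemma fs_Fm[simp]: "fs (\<lambda>j. f (shift_minus j k) t)" by (rule fs_sm[OF fs_f])

lemma Ys_nn: "0 \<le> Ys t" unfolding Ys_def by (rule fsum_nonneg) simp
lemma Qg_nn: "0 \<le> Qg t" unfolding Qg_def by (intro sum_nonneg fsum_nonneg) simp

lemma y0_le: "\<bar>yv 0 j t\<bar> \<le> pnorm d h R \<phi> j t"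
proof -
  have "(yv 0 j t)\<^sup>2 \<le> (\<Sum>i<d. (yv i j t)\<^sup>2)"
    using d0 by (intro member_le_sum) auto
  then have "sqrt ((yv 0 j t)\<^sup>2) \<le> sqrt (\<Sum>i<d. (yv i j t)\<^sup>2)" by (rule real_sqrt_le_mono)
  then show ?thesis by (simp add: pnorm_eq)
qed

lemma Bc_nn: "0 \<le> Bc" using hpos Rpos apos by (simp add: Bc_def)

lemma sinh_lower: assumes "f j t \<noteq> 0" shows "(sinh Bc)\<^sup>2 \<le> (\<Sum>k<d. (sinh (bb k j t))\<^sup>2)"
proof -
  have "1 \<le> pnorm d h R \<phi> j t" using supp[OF assms] by simp
  then have one: "1 \<le> (\<Sum>i<d. (yv i j t)\<^sup>2)" by (simp add: pnorm_eq)
  have "\<exists>k<d. 1 / real d \<le> (yv k j t)\<^sup>2"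
  proof (rule ccontr)
    assume "\<not> ?thesis"
    then have "\<And>k. k \<in> {..<d} \<Longrightarrow> (yv k j t)\<^sup>2 < 1 / real d" by auto
    then have "(\<Sum>i<d. (yv i j t)\<^sup>2) < (\<Sum>i<d. 1 / real d)"
      using d0 by (intro sum_strict_mono) auto
    then show False using one d0 by simp
  qed
  then obtain k where k: "k < d" "1 / real d \<le> (yv k j t)\<^sup>2" by blast
  have "sqrt (1 / real d) \<le> sqrt ((yv k j t)\<^sup>2)" using k(2) by (rule real_sqrt_le_mono)
  then have yk: "1 / sqrt d \<le> \<bar>yv k j t\<bar>" by (simp add: real_sqrt_divide)
  have "Bc \<le> \<bar>bb k j t\<bar>"
  proof -
    have "Bc = (2 * \<alpha> * h / R) * (1 / sqrt d)" by (simp add: Bc_def)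
    also have "\<dots> \<le> (2 * \<alpha> * h / R) * \<bar>yv k j t\<bar>"
      using yk hpos Rpos apos by (intro mult_left_mono) auto
    also have "\<dots> = \<bar>bb k j t\<bar>" using hpos Rpos apos by (simp add: bb_def abs_mult)
    finally show ?thesis .
  qed
  then have "sinh Bc \<le> sinh \<bar>bb k j t\<bar>" by (simp only: sinh_real_le_iff)
  then have "(sinh Bc)\<^sup>2 \<le> (sinh \<bar>bb k j t\<bar>)\<^sup>2"
    using Bc_nn by (intro power_mono) auto
  also have "\<dots> = (sinh (bb k j t))\<^sup>2" by (simp add: sinh_real_abs)
  also have "\<dots> \<le> (\<Sum>k<d. (sinh (bb k j t))\<^sup>2)"
    using k(1) by (intro member_le_sum) auto
  finally show ?thesis .
qed

lemma Sk_lower: "(sinh Bc)\<^sup>2 * Ys t \<le> Sk t"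
proof -
  have "(sinh Bc)\<^sup>2 * Ys t = fsum (\<lambda>j. (sinh Bc)\<^sup>2 * (f j t)\<^sup>2)" by (simp add: Ys_def fsum_cmult)
  also have "\<dots> \<le> fsum (\<lambda>j. \<Sum>k<d. (sinh (bb k j t))\<^sup>2 * (f j t)\<^sup>2)"
  proof (rule fsum_mono)
    show "fs (\<lambda>j. (sinh Bc)\<^sup>2 * (f j t)\<^sup>2)" by simp
    show "fs (\<lambda>j. \<Sum>k<d. (sinh (bb k j t))\<^sup>2 * (f j t)\<^sup>2)" by (intro fs_sum) auto
    fix j show "(sinh Bc)\<^sup>2 * (f j t)\<^sup>2 \<le> (\<Sum>k<d. (sinh (bb k j t))\<^sup>2 * (f j t)\<^sup>2)"
    proof (cases "f j t = 0")
      case False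
      then show ?thesis using sinh_lower[OF False]
        by (simp add: sum_distrib_right[symmetric] mult_right_mono)
    qed simp
  qed
  also have "\<dots> = Sk t" unfolding Sk_def by (rule fsum_sumk) auto
  finally show ?thesis .
qed

end


lemma amgm: fixes a b e :: real assumes "0 < e" shows "a * b \<le> (e * a\<^sup>2 + b\<^sup>2 / e) / 2"
proof -
  have "0 \<le> (e * a - b)\<^sup>2" by simp
  then have "2 * e * (a * b) \<le> e * e * a\<^sup>2 + b\<^sup>2" by (simp add: power2_eq_square algebra_simps)
  then show ?thesis using assms by (simp add: field_simps power2_eq_square)
qed

lemma sinh_mid: fixes a b :: real assumes "0 < a" shows "\<bar>sinh (a + b)\<bar> \<le> \<bar>sinh b\<bar> + \<bar>sinh (b + 2 * a)\<bar>"
proof (cases "0 \<le> a + b")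
  case True
  have h1: "sinh (a + b) \<le> sinh (b + 2 * a)" using assms by simp
  have h2: "0 \<le> sinh (a + b)" using True by simp
  have h3: "\<bar>sinh (b + 2 * a)\<bar> = sinh (b + 2 * a)" using h1 h2 by simp
  show ?thesis using h1 h3 abs_ge_zero[of "sinh b"] abs_ge_zero[of "sinh (a + b)"] h2 by linarith
next
  case False
  have h1: "sinh b \<le> sinh (a + b)" using assms by simp
  have h2: "sinh (a + b) < 0" using False by simp
  have h3: "\<bar>sinh b\<bar> = - sinh b" using h1 h2 by simp
  have h4: "\<bar>sinh (a + b)\<bar> = - sinh (a + b)" using h2 by simp
  show ?thesis using h1 h3 h4 abs_ge_zero[of "sinh (b + 2 * a)"] by linarith
qed

context carl3 begin

definition X0 where "X0 t = fsum (\<lambda>j. (sinh (bb 0 j t))\<^sup>2 * (f j t)\<^sup>2)"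
definition K1 where "K1 = 2 * \<alpha> * (P1\<^sup>2 + 4 * P2)"
definition cb where "cb = 2 * \<alpha> * (P1 + 1) * h / R"

lemma cb_pos: "0 < cb" using apos hpos Rpos P1nn by (simp add: cb_def)

lemma wdd_bound: "\<bar>ip (\<lambda>j. wdd j t * f j t) (\<lambda>j. f j t)\<bar> \<le> K1 * Ys t"
proof -
  have "\<bar>ip (\<lambda>j. wdd j t * f j t) (\<lambda>j. f j t)\<bar> \<le> fsum (\<lambda>j. \<bar>wdd j t * f j t * f j t\<bar>)"
    unfolding ip_def by (rule fsum_abs) simp
  also have "\<dots> \<le> fsum (\<lambda>j. K1 * (f j t)\<^sup>2)"
  proof (rule fsum_mono)
    fix j show "\<bar>wdd j t * f j t * f j t\<bar> \<le> K1 * (f j t)\<^sup>2"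
    proof (cases "f j t = 0")
      case False
      note s = supp[OF False]
      have p1: "\<bar>\<phi>1 t\<bar> \<le> P1" and p2: "\<bar>\<phi>2 t\<bar> \<le> P2" using s P1 P2 by auto
      have y: "\<bar>yv 0 j t\<bar> \<le> 4" using y0_le[of j t] s by linarith
      have "(\<phi>1 t)\<^sup>2 \<le> P1\<^sup>2" using p1 by (metis abs_le_square_iff abs_of_nonneg P1nn)
      moreover have "\<bar>yv 0 j t * \<phi>2 t\<bar> \<le> 4 * P2"
        unfolding abs_mult using y p2 by (intro mult_mono) auto
      moreover have "\<bar>(\<phi>1 t)\<^sup>2 + yv 0 j t * \<phi>2 t\<bar> \<le> \<bar>(\<phi>1 t)\<^sup>2\<bar> + \<bar>yv 0 j t * \<phi>2 t\<bar>"
        by (rule abs_triangle_ineq)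
      moreover have "\<bar>(\<phi>1 t)\<^sup>2\<bar> = (\<phi>1 t)\<^sup>2" by simp
      ultimately have "\<bar>(\<phi>1 t)\<^sup>2 + yv 0 j t * \<phi>2 t\<bar> \<le> P1\<^sup>2 + 4 * P2" by linarith
      then have "\<bar>wdd j t\<bar> \<le> K1" unfolding wdd_def K1_def using apos by (simp add: abs_mult)
      then have e1: "\<bar>wdd j t\<bar> * (\<bar>f j t\<bar> * \<bar>f j t\<bar>) \<le> K1 * (\<bar>f j t\<bar> * \<bar>f j t\<bar>)"
        by (rule mult_right_mono) simp
      have e2: "\<bar>wdd j t * f j t * f j t\<bar> = \<bar>wdd j t\<bar> * (\<bar>f j t\<bar> * \<bar>f j t\<bar>)"
        by (metis abs_mult mult.assoc)
      have e3: "(f j t)\<^sup>2 = \<bar>f j t\<bar> * \<bar>f j t\<bar>" by (simp only: power2_eq_square abs_mult_self_eq)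
      show ?thesis unfolding e2 e3 by (rule e1)
    qed simp
  qed simp_all
  also have "\<dots> = K1 * Ys t" by (simp add: Ys_def fsum_cmult)
  finally show ?thesis .
qed

lemma Xq_bound: assumes e: "0 < e" shows "\<bar>Xq t\<bar> \<le> e * X0 t + Ys t / e"
proof -
  let ?s = "\<lambda>j. sinh (bb 0 j t)"
  have "\<bar>Xq t\<bar> \<le> fsum (\<lambda>j. \<bar>qq 0 j t * f j t * f (shift_plus j 0) t\<bar>)"
    unfolding Xq_def by (rule fsum_abs) simp
  also have "\<dots> \<le> fsum (\<lambda>j. e / 2 * ((?s j)\<^sup>2 * (f j t)\<^sup>2) + e / 2 * ((?s (shift_plus j 0))\<^sup>2 * (f (shift_plus j 0) t)\<^sup>2)
       + ((f (shift_plus j 0) t)\<^sup>2 / (2 * e) + (f j t)\<^sup>2 / (2 * e)))"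
  proof (rule fsum_mono)
    show "fs (\<lambda>j. e / 2 * ((?s j)\<^sup>2 * (f j t)\<^sup>2) + e / 2 * ((?s (shift_plus j 0))\<^sup>2 * (f (shift_plus j 0) t)\<^sup>2)
       + ((f (shift_plus j 0) t)\<^sup>2 / (2 * e) + (f j t)\<^sup>2 / (2 * e)))"
      by (intro fs_add fs_multR fs_div fs_pow) simp_all
    fix j
    have q: "\<bar>qq 0 j t\<bar> \<le> \<bar>?s j\<bar> + \<bar>?s (shift_plus j 0)\<bar>"
      unfolding qq_def dk_def bb_sp using sinh_mid[OF aa_pos, of "bb 0 j t"] by (simp add: add.commute)
    have "\<bar>qq 0 j t * f j t * f (shift_plus j 0) t\<bar> \<le> (\<bar>?s j\<bar> + \<bar>?s (shift_plus j 0)\<bar>) * (\<bar>f j t\<bar> * \<bar>f (shift_plus j 0) t\<bar>)"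
      unfolding abs_mult mult.assoc by (intro mult_right_mono q) auto
    also have "\<dots> = (\<bar>?s j\<bar> * \<bar>f j t\<bar>) * \<bar>f (shift_plus j 0) t\<bar> + (\<bar>?s (shift_plus j 0)\<bar> * \<bar>f (shift_plus j 0) t\<bar>) * \<bar>f j t\<bar>"
      by (simp add: algebra_simps)
    also have "\<dots> \<le> (e * (\<bar>?s j\<bar> * \<bar>f j t\<bar>)\<^sup>2 + \<bar>f (shift_plus j 0) t\<bar>\<^sup>2 / e) / 2
        + (e * (\<bar>?s (shift_plus j 0)\<bar> * \<bar>f (shift_plus j 0) t\<bar>)\<^sup>2 + \<bar>f j t\<bar>\<^sup>2 / e) / 2"
      using amgm[OF e, of "\<bar>?s j\<bar> * \<bar>f j t\<bar>" "\<bar>f (shift_plus j 0) t\<bar>"]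
        amgm[OF e, of "\<bar>?s (shift_plus j 0)\<bar> * \<bar>f (shift_plus j 0) t\<bar>" "\<bar>f j t\<bar>"] by linarith
    also have "\<dots> = e / 2 * ((?s j)\<^sup>2 * (f j t)\<^sup>2) + e / 2 * ((?s (shift_plus j 0))\<^sup>2 * (f (shift_plus j 0) t)\<^sup>2)
       + ((f (shift_plus j 0) t)\<^sup>2 / (2 * e) + (f j t)\<^sup>2 / (2 * e))"
      by (simp add: power_mult_distrib field_simps)
    finally show "\<bar>qq 0 j t * f j t * f (shift_plus j 0) t\<bar> \<le> \<dots>" .
  qed simp
  also have "\<dots> = e / 2 * X0 t + e / 2 * fsum (\<lambda>j. (\<lambda>j. (?s j)\<^sup>2 * (f j t)\<^sup>2) (shift_plus j 0))
       + (fsum (\<lambda>j. (\<lambda>j. (f j t)\<^sup>2) (shift_plus j 0)) / (2 * e) + Ys t / (2 * e))"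
    unfolding X0_def Ys_def by (simp add: fsum_add fsum_cmult fsum_divide)
  also have "\<dots> = e * X0 t + Ys t / e"
    unfolding fsum_shift_p[of "\<lambda>j. (?s j)\<^sup>2 * (f j t)\<^sup>2", simplified]
      fsum_shift_p[of "\<lambda>j. (f j t)\<^sup>2", simplified]
    by (simp add: X0_def Ys_def field_simps)
  finally show ?thesis .
qed

lemma X0_le: "X0 t \<le> Sk t"
  unfolding X0_def Sk_def using d0
  by (intro member_le_sum) (auto intro: fsum_nonneg)

lemma Err_bound: "\<bar>Err t\<bar> \<le> Main t / 2"
proof (cases "\<exists>j. f j t \<noteq> 0")
  case False
  then have z: "\<And>j. f j t = 0" by auto
  have "Err t = 0" unfolding Err_def Xq_def ip_def by (simp add: z)
  moreover have "0 \<le> Main t"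
  proof -
    have "0 \<le> (sinh Bc)\<^sup>2 * Ys t" using Ys_nn[of t] by simp
    then have "0 \<le> Sk t" using Sk_lower[of t] by linarith
    then have "0 \<le> Sk t + Qg t" using Qg_nn[of t] by linarith
    moreover have "0 \<le> 4 * s2 / h ^ 4" using s2_pos hpos by simp
    ultimately show ?thesis unfolding Main_eq by (rule mult_nonneg_nonneg[rotated])
  qed
  ultimately show ?thesis by simp
next
  case True
  then obtain j where "f j t \<noteq> 0" by auto
  then have t: "0 \<le> t" "t \<le> 1" using supp by auto
  have ccb: "\<bar>cc t\<bar> \<le> cb"
    using P1[OF t] apos hpos Rpos unfolding cc_def cb_def
    by (simp add: abs_mult divide_right_mono mult_left_mono)
  define e where "e = s2 / (4 * h\<^sup>2 * cb)"
  have e0: "0 < e" using s2_pos hpos cb_pos by (simp add: e_def)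
  have tri: "\<bar>Err t\<bar> \<le> \<bar>ip (\<lambda>j. wdd j t * f j t) (\<lambda>j. f j t)\<bar> + \<bar>4 * cc t / h\<^sup>2 * Xq t\<bar>"
    unfolding Err_def by (rule abs_triangle_ineq)
  have am: "\<bar>4 * cc t / h\<^sup>2 * Xq t\<bar> = 4 * \<bar>cc t\<bar> / h\<^sup>2 * \<bar>Xq t\<bar>" by (simp add: abs_mult)
  have "\<bar>Err t\<bar> \<le> K1 * Ys t + 4 * \<bar>cc t\<bar> / h\<^sup>2 * \<bar>Xq t\<bar>"
    using tri am wdd_bound[of t] by linarith
  also have "\<dots> \<le> K1 * Ys t + 4 * cb / h\<^sup>2 * (e * X0 t + Ys t / e)"
  proof -
    have c1: "4 * \<bar>cc t\<bar> / h\<^sup>2 \<le> 4 * cb / h\<^sup>2" using ccb by (simp add: divide_right_mono)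
    have c2: "0 \<le> 4 * cb / h\<^sup>2" using cb_pos by simp
    have "4 * \<bar>cc t\<bar> / h\<^sup>2 * \<bar>Xq t\<bar> \<le> 4 * cb / h\<^sup>2 * (e * X0 t + Ys t / e)"
      by (rule mult_mono[OF c1 Xq_bound[OF e0] c2 abs_ge_zero])
    then show ?thesis by linarith
  qed
  also have "4 * cb / h\<^sup>2 * (e * X0 t + Ys t / e) = s2 / h ^ 4 * X0 t + 16 * cb\<^sup>2 / s2 * Ys t"
    unfolding e_def using hpos cb_pos s2_pos by (simp add: field_simps power2_eq_square power4_eq_xxxx)
  also have "16 * cb\<^sup>2 / s2 \<le> 32 * \<alpha> * (P1 + 1)\<^sup>2"
  proof -
    have "16 * cb\<^sup>2 / s2 \<le> 16 * cb\<^sup>2 / (2 * aa)"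
      using s2_ge aa_pos by (intro divide_left_mono) auto
    also have "\<dots> = 32 * \<alpha> * (P1 + 1)\<^sup>2"
      unfolding cb_def aa_def using apos hpos Rpos by (simp add: field_simps power2_eq_square)
    finally show ?thesis .
  qed
  then have "16 * cb\<^sup>2 / s2 * Ys t \<le> 32 * \<alpha> * (P1 + 1)\<^sup>2 * Ys t" using Ys_nn by (rule mult_right_mono)
  then have "K1 * Ys t + (s2 / h ^ 4 * X0 t + 16 * cb\<^sup>2 / s2 * Ys t)
      \<le> \<alpha> * (2 * (P1\<^sup>2 + 4 * P2) + 32 * (P1 + 1)\<^sup>2) * Ys t + s2 / h ^ 4 * X0 t"
    unfolding K1_def by (simp add: algebra_simps)
  also have "\<alpha> * (2 * (P1\<^sup>2 + 4 * P2) + 32 * (P1 + 1)\<^sup>2) * Ys t \<le> s2 / h ^ 4 * Sk t"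
  proof -
    let ?K = "2 * (P1\<^sup>2 + 4 * P2) + 32 * (P1 + 1)\<^sup>2"
    have K0: "0 \<le> ?K" using P2nn by simp
    have a': "\<alpha> \<le> cphi * (s2 / h ^ 4 * (sinh Bc)\<^sup>2)" using acond unfolding s2_eq[symmetric] Bc_def by simp
    have "\<alpha> * ?K * Ys t \<le> cphi * (s2 / h ^ 4 * (sinh Bc)\<^sup>2) * ?K * Ys t"
      using a' K0 Ys_nn by (intro mult_right_mono) auto
    also have "\<dots> = (cphi * ?K) * (s2 / h ^ 4 * ((sinh Bc)\<^sup>2 * Ys t))" by (simp add: algebra_simps)
    also have "\<dots> \<le> 1 * (s2 / h ^ 4 * ((sinh Bc)\<^sup>2 * Ys t))"
      using cphi_small s2_pos hpos Ys_nn by (intro mult_right_mono) auto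
    also have "\<dots> \<le> s2 / h ^ 4 * Sk t"
    proof -
      have "s2 / h ^ 4 * ((sinh Bc)\<^sup>2 * Ys t) \<le> s2 / h ^ 4 * Sk t"
        by (rule mult_left_mono[OF Sk_lower]) (use s2_pos hpos in simp)
      then show ?thesis by simp
    qed
    finally show ?thesis .
  qed
  finally have A: "\<bar>Err t\<bar> \<le> s2 / h ^ 4 * Sk t + s2 / h ^ 4 * X0 t" by simp
  have "s2 / h ^ 4 * X0 t \<le> s2 / h ^ 4 * Sk t" by (rule mult_left_mono[OF X0_le]) (use s2_pos hpos in simp)
  moreover have "Main t / 2 = 2 * (s2 / h ^ 4 * Sk t) + 2 * (s2 / h ^ 4 * Qg t)" unfolding Main_eq using hpos by (simp add: field_simps)
  moreover have "0 \<le> s2 / h ^ 4 * Qg t" using s2_pos hpos Qg_nn by simp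
  ultimately show ?thesis using A by linarith
qed

end


context carl3 begin

lemma pt: "Gd t + 2 * s2 / h ^ 4 * ((sinh Bc)\<^sup>2 * Ys t + Qg t) \<le> fsum (\<lambda>j. (Lf j t)\<^sup>2)"
proof -
  have a: "Gd t + Err t + Main t \<le> fsum (\<lambda>j. (Lf j t)\<^sup>2)" using L_ge[of t] ident[of t] by simp
  have b: "- (Main t / 2) \<le> Err t" using Err_bound[of t] by linarith
  have c: "Main t / 2 = 2 * s2 / h ^ 4 * (Sk t + Qg t)" unfolding Main_eq using hpos by (simp add: field_simps)
  have d: "2 * s2 / h ^ 4 * ((sinh Bc)\<^sup>2 * Ys t + Qg t) \<le> 2 * s2 / h ^ 4 * (Sk t + Qg t)"
    by (rule mult_left_mono) (use Sk_lower[of t] s2_pos hpos in auto)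
  show ?thesis using a b c d by linarith
qed

definition W where "W = U \<union> (\<Union>k<d. (\<lambda>j. shift_minus j k) ` U \<union> (\<lambda>j. shift_plus j k) ` U)"

lemma finW: "finite W" unfolding W_def using finU by auto

lemma Lf_W: assumes "j \<notin> W" shows "Lf j t = 0"
proof -
  have jU: "j \<notin> U" using assms by (simp add: W_def)
  have z1: "f j t = 0" using jU fU by blast
  have z2: "fd j t = 0" using jU fd_U by blast
  have z3: "f (shift_plus j k) t = 0" if "k < d" for k
  proof (rule ccontr)
    assume "f (shift_plus j k) t \<noteq> 0"
    then have "shift_plus j k \<in> U" by (rule fU)
    then have "j \<in> (\<lambda>i. shift_minus i k) ` U" by (intro image_eqI[where x="shift_plus j k"]) simp_all
    then have "j \<in> W" using that unfolding W_def by blast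
    then show False using assms by simp
  qed
  have z4: "f (shift_minus j k) t = 0" if "k < d" for k
  proof (rule ccontr)
    assume "f (shift_minus j k) t \<noteq> 0"
    then have "shift_minus j k \<in> U" by (rule fU)
    then have "j \<in> (\<lambda>i. shift_plus i k) ` U" by (intro image_eqI[where x="shift_minus j k"]) simp_all
    then have "j \<in> W" using that unfolding W_def by blast
    then show False using assms by simp
  qed
  show ?thesis unfolding Lf_def using z1 z2 z3 z4 by simp
qed

lemma cont_f: "continuous_on UNIV (f j)"
  by (rule continuous_at_imp_continuous_on) (use f_der DERIV_isCont in blast)
lemma cont_wd: "continuous_on UNIV (\<lambda>t. wd j t)"
  by (rule continuous_at_imp_continuous_on) (use wd_der DERIV_isCont in blast)
lemma cont_dk: "continuous_on UNIV (\<lambda>t. dk k j t)"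
  by (rule continuous_at_imp_continuous_on) (use dk_der DERIV_isCont in blast)
lemma cont_Lf: "continuous_on UNIV (\<lambda>t. Lf j t)"
  unfolding Lf_def
  by (intro continuous_intros fd_cont cont_wd cont_dk cont_f
      continuous_on_compose2[OF cont_f, of UNIV] continuous_on_compose2[OF cont_dk, of UNIV]) (use hpos in auto)

lemma LW: "fsum (\<lambda>j. (Lf j t)\<^sup>2) = (\<Sum>j\<in>W. (Lf j t)\<^sup>2)"
  by (rule fsum_sum[OF finW]) (use Lf_W in fastforce)

lemma YU: "Ys t = (\<Sum>j\<in>U. (f j t)\<^sup>2)"
  unfolding Ys_def by (rule fsum_sum[OF finU]) (use fU in fastforce)

lemma QW: "Qg t = (\<Sum>k<d. \<Sum>j\<in>W. ((f (shift_plus j k) t - f (shift_minus j k) t) / 2)\<^sup>2)"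
  unfolding Qg_def
proof (intro sum.cong refl fsum_sum[OF finW] subsetI)
  fix k j assume k: "k \<in> {..<d}" and "j \<in> {j. ((f (shift_plus j k) t - f (shift_minus j k) t) / 2)\<^sup>2 \<noteq> 0}"
  then have "f (shift_plus j k) t \<noteq> 0 \<or> f (shift_minus j k) t \<noteq> 0" by auto
  then show "j \<in> W"
  proof
    assume "f (shift_plus j k) t \<noteq> 0"
    then have "shift_plus j k \<in> U" by (rule fU)
    then have "j \<in> (\<lambda>i. shift_minus i k) ` U" by (intro image_eqI[where x="shift_plus j k"]) simp_all
    then show "j \<in> W" using k unfolding W_def by blast
  next
    assume "f (shift_minus j k) t \<noteq> 0"
    then have "shift_minus j k \<in> U" by (rule fU)
    then have "j \<in> (\<lambda>i. shift_plus i k) ` U" by (intro image_eqI[where x="shift_minus j k"]) simp_all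
    then show "j \<in> W" using k unfolding W_def by blast
  qed
qed

lemma int_L: "(\<lambda>t. fsum (\<lambda>j. (Lf j t)\<^sup>2)) integrable_on {0..1}"
  unfolding LW by (intro integrable_continuous_real continuous_intros continuous_on_subset[OF cont_Lf]) auto
lemma int_Y: "Ys integrable_on {0..1}"
proof -
  have "(\<lambda>t. \<Sum>j\<in>U. (f j t)\<^sup>2) integrable_on {0..1}"
    by (intro integrable_continuous_real continuous_intros continuous_on_subset[OF cont_f]) auto
  then show ?thesis unfolding YU[abs_def] .
qed
lemma int_Q: "Qg integrable_on {0..1}"
proof -
  have "(\<lambda>t. \<Sum>k<d. \<Sum>j\<in>W. ((f (shift_plus j k) t - f (shift_minus j k) t) / 2)\<^sup>2) integrable_on {0..1}"
    by (intro integrable_continuous_real continuous_intros continuous_on_subset[OF cont_f]) auto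
  then show ?thesis unfolding QW[abs_def] .
qed

lemma G0: "Gfun 0 = 0" unfolding Gfun_def ip_def by (simp add: f0)
lemma G1: "Gfun 1 = 0" unfolding Gfun_def ip_def by (simp add: f1)

lemma int_G: "(Gd has_integral 0) {0..1}"
proof -
  have "(Gd has_integral (Gfun 1 - Gfun 0)) {0..1}"
    by (rule fundamental_theorem_of_calculus)
       (auto simp: has_real_derivative_iff_has_vector_derivative[symmetric] intro: has_field_derivative_at_within[OF G_der])
  then show ?thesis by (simp add: G0 G1)
qed

lemma integral_ineq:
  "2 * s2 / h ^ 4 * ((sinh Bc)\<^sup>2 * integral {0..1} Ys + integral {0..1} Qg)
     \<le> integral {0..1} (\<lambda>t. fsum (\<lambda>j. (Lf j t)\<^sup>2))"
proof -
  have "((\<lambda>t. Gd t + 2 * s2 / h ^ 4 * ((sinh Bc)\<^sup>2 * Ys t + Qg t)) has_integral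
      (0 + 2 * s2 / h ^ 4 * ((sinh Bc)\<^sup>2 * integral {0..1} Ys + integral {0..1} Qg))) {0..1}"
    by (intro has_integral_add int_G has_integral_mult_right integrable_integral int_Y int_Q)
  moreover have "((\<lambda>t. fsum (\<lambda>j. (Lf j t)\<^sup>2)) has_integral integral {0..1} (\<lambda>t. fsum (\<lambda>j. (Lf j t)\<^sup>2))) {0..1}"
    by (rule integrable_integral[OF int_L])
  ultimately show ?thesis using pt by (simp add: has_integral_le)
qed

lemma IY_nn: "0 \<le> integral {0..1} Ys" by (rule integral_nonneg[OF int_Y]) (rule Ys_nn)
lemma IQ_nn: "0 \<le> integral {0..1} Qg" by (rule integral_nonneg[OF int_Q]) (rule Qg_nn)

end


lemma infsum_fsum: assumes "fs F" "\<And>j. F j \<noteq> 0 \<Longrightarrow> j \<in> A" shows "infsum F A = fsum F"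
proof -
  have "infsum F A = infsum F {j. F j \<noteq> 0}"
    by (rule infsum_cong_neutral) (use assms(2) in auto)
  also have "\<dots> = fsum F" using assms(1) by (simp add: fs_def fsum_def)
  finally show ?thesis .
qed

lemma lat_sp: "j \<notin> lat d \<Longrightarrow> k < d \<Longrightarrow> shift_plus j k \<notin> lat d"
  by (auto simp: lat_def sp_apply)
lemma lat_sm: "j \<notin> lat d \<Longrightarrow> k < d \<Longrightarrow> shift_minus j k \<notin> lat d"
  by (auto simp: lat_def sm_apply)

locale carl4 = carl3 +
  assumes latf: "\<And>j t. f j t \<noteq> 0 \<Longrightarrow> j \<in> lat d"
begin

lemma conj_eq: "conj_op d h R \<alpha> \<phi> f j t = Lf j t"
proof -
  have wq: "weight d h R \<alpha> \<phi> = w" by (intro ext) (simp add: weight_eq)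
  define u where "u = (\<lambda>i s. exp (- w i s) * f i s)"
  have E: "((\<lambda>s. exp (- w j s)) has_real_derivative exp (- w j t) * (- wd j t)) (at t)"
    by (rule DERIV_chain'[OF DERIV_minus[OF w_der] DERIV_exp])
  have D: "(u j has_real_derivative exp (- w j t) * fd j t + exp (- w j t) * (- wd j t) * f j t) (at t)"
    unfolding u_def using DERIV_mult'[OF E f_der] by simp
  have dv: "deriv (u j) t = exp (- w j t) * (fd j t - wd j t * f j t)"
    using DERIV_imp_deriv[OF D] by (simp add: algebra_simps)
  have k1: "exp (w j t) * u (shift_plus j k) t = exp (- dk k j t) * f (shift_plus j k) t" if "k < d" for k
    unfolding u_def w_sp[OF that] mult.assoc[symmetric] mult_exp_exp by simp
  have k2: "exp (w j t) * u (shift_minus j k) t = exp (dk k (shift_minus j k) t) * f (shift_minus j k) t" if "k < d" for k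
    unfolding u_def w_sm[OF that] mult.assoc[symmetric] mult_exp_exp by simp
  have k0: "exp (w j t) * u j t = f j t" unfolding u_def mult.assoc[symmetric] mult_exp_exp by simp
  have S: "exp (w j t) * (\<Sum>k<d. u (shift_plus j k) t - 2 * u j t + u (shift_minus j k) t)
     = (\<Sum>k<d. exp (- dk k j t) * f (shift_plus j k) t - 2 * f j t + exp (dk k (shift_minus j k) t) * f (shift_minus j k) t)"
    unfolding sum_distrib_left
  proof (intro sum.cong refl)
    fix k assume "k \<in> {..<d}"
    then have k: "k < d" by simp
    have "exp (w j t) * (u (shift_plus j k) t - 2 * u j t + u (shift_minus j k) t)
       = exp (w j t) * u (shift_plus j k) t - 2 * (exp (w j t) * u j t) + exp (w j t) * u (shift_minus j k) t"
      by (simp add: algebra_simps)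
    then show "exp (w j t) * (u (shift_plus j k) t - 2 * u j t + u (shift_minus j k) t)
       = exp (- dk k j t) * f (shift_plus j k) t - 2 * f j t + exp (dk k (shift_minus j k) t) * f (shift_minus j k) t"
      unfolding k1[OF k] k2[OF k] k0 .
  qed
  have "conj_op d h R \<alpha> \<phi> f j t = exp (w j t) * (deriv (u j) t - dlap d h u j t)"
    unfolding conj_op_def wq u_def by simp
  also have "\<dots> = exp (w j t) * exp (- w j t) * (fd j t - wd j t * f j t)
      - exp (w j t) * (\<Sum>k<d. u (shift_plus j k) t - 2 * u j t + u (shift_minus j k) t) / h\<^sup>2"
    unfolding dv dlap_def by (simp add: algebra_simps)
  also have "\<dots> = Lf j t" unfolding S Lf_def by (simp add: mult_exp_exp)
  finally show ?thesis .
qed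

lemma Lf_lat: assumes "j \<notin> lat d" shows "Lf j t = 0"
proof -
  have z1: "f j t = 0" using assms latf by blast
  have z2: "fd j t = 0"
  proof -
    have "f j = (\<lambda>_. 0)" using assms latf by blast
    then have "(f j has_real_derivative 0) (at t)" by simp
    then show ?thesis using f_der[of j t] DERIV_unique by blast
  qed
  have z3: "f (shift_plus j k) t = 0" "f (shift_minus j k) t = 0" if "k < d" for k
    using latf lat_sp[OF assms that] lat_sm[OF assms that] by blast+
  show ?thesis unfolding Lf_def using z1 z2 z3 by simp
qed

lemma fs_Lf: "fs (\<lambda>j. Lf j t)" by (rule fs_sub[OF finW]) (use Lf_W in blast)

lemma L2_f: "L2l2 d h f = sqrt (h ^ d * integral {0..1} Ys)"
proof -
  have "(\<lambda>t. \<Sum>\<^sub>\<infinity>j\<in>lat d. (f j t)\<^sup>2) = Ys"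
    by (intro ext, unfold Ys_def, rule infsum_fsum) (use latf in auto)
  then show ?thesis by (simp add: L2l2_def)
qed

lemma L2_L: "L2l2 d h (conj_op d h R \<alpha> \<phi> f) = sqrt (h ^ d * integral {0..1} (\<lambda>t. fsum (\<lambda>j. (Lf j t)\<^sup>2)))"
proof -
  have "(\<lambda>t. \<Sum>\<^sub>\<infinity>j\<in>lat d. (conj_op d h R \<alpha> \<phi> f j t)\<^sup>2) = (\<lambda>t. fsum (\<lambda>j. (Lf j t)\<^sup>2))"
    unfolding conj_eq by (intro ext infsum_fsum) (use fs_Lf Lf_lat in auto)
  then show ?thesis by (simp add: L2l2_def)
qed

lemma cgrad_f: "cgrad d h f = sqrt (h ^ d * integral {0..1} Qg)"
proof -
  have "(\<lambda>t. \<Sum>\<^sub>\<infinity>j\<in>lat d. \<Sum>k<d. ((f (shift_plus j k) t - f (shift_minus j k) t) / 2)\<^sup>2) = Qg"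
  proof
    fix t
    have "(\<Sum>\<^sub>\<infinity>j\<in>lat d. \<Sum>k<d. ((f (shift_plus j k) t - f (shift_minus j k) t) / 2)\<^sup>2)
        = fsum (\<lambda>j. \<Sum>k<d. ((f (shift_plus j k) t - f (shift_minus j k) t) / 2)\<^sup>2)"
    proof (rule infsum_fsum)
      show "fs (\<lambda>j. \<Sum>k<d. ((f (shift_plus j k) t - f (shift_minus j k) t) / 2)\<^sup>2)" by (intro fs_sum) auto
      fix j assume nz: "(\<Sum>k<d. ((f (shift_plus j k) t - f (shift_minus j k) t) / 2)\<^sup>2) \<noteq> 0"
      show "j \<in> lat d"
      proof (rule ccontr)
        assume "j \<notin> lat d"
        then have "\<And>k. k < d \<Longrightarrow> f (shift_plus j k) t = 0 \<and> f (shift_minus j k) t = 0"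
          using latf lat_sp lat_sm by blast
        then show False using nz by simp
      qed
    qed
    also have "\<dots> = Qg t" unfolding Qg_def by (rule fsum_sumk) auto
    finally show "(\<Sum>\<^sub>\<infinity>j\<in>lat d. \<Sum>k<d. ((f (shift_plus j k) t - f (shift_minus j k) t) / 2)\<^sup>2) = Qg t" .
  qed
  then show ?thesis by (simp add: cgrad_def)
qed

end


lemma final_arith:
  fixes s h b Y Q H L :: real
  assumes s: "0 < s" and h: "0 < h" and b: "0 \<le> b" and Y: "0 \<le> Y" and Q: "0 \<le> Q" and H: "0 \<le> H"
    and le: "2 * s / h ^ 4 * (b\<^sup>2 * Y + Q) \<le> L"
  shows "(1 / h\<^sup>2) * sqrt s * b * sqrt (H * Y) + (2 / h\<^sup>2) * sqrt s * sqrt (H * Q) \<le> 2 * sqrt (H * L)"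
proof -
  define A where "A = (1 / h\<^sup>2) * sqrt s * b * sqrt (H * Y)"
  define B where "B = (2 / h\<^sup>2) * sqrt s * sqrt (H * Q)"
  have A0: "0 \<le> A" unfolding A_def using s b Y H by simp
  have B0: "0 \<le> B" unfolding B_def using s Q H by simp
  have A2: "A\<^sup>2 = s * b\<^sup>2 * (H * Y) / h ^ 4"
    unfolding A_def using s Y H h by (simp add: power_mult_distrib power2_eq_square[of "sqrt _"] power_divide)
  have B2: "B\<^sup>2 = 4 * s * (H * Q) / h ^ 4"
    unfolding B_def using s Q H h by (simp add: power_mult_distrib power_divide)
  have "(A + B)\<^sup>2 \<le> 2 * (A\<^sup>2 + B\<^sup>2)"
  proof -
    have e1: "(A + B)\<^sup>2 = A\<^sup>2 + B\<^sup>2 + 2 * (A * B)" by (simp add: power2_eq_square algebra_simps)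
    have e2: "(A - B)\<^sup>2 = A\<^sup>2 + B\<^sup>2 - 2 * (A * B)" by (simp add: power2_eq_square algebra_simps)
    have "0 \<le> (A - B)\<^sup>2" by simp
    then have "0 \<le> A\<^sup>2 + B\<^sup>2 - 2 * (A * B)" unfolding e2 .
    then show ?thesis unfolding e1 by (smt (verit))
  qed
  also have "\<dots> = 2 * s * H * (b\<^sup>2 * Y + 4 * Q) / h ^ 4" unfolding A2 B2 using h by (simp add: field_simps)
  also have "\<dots> \<le> 4 * (H * (2 * s / h ^ 4 * (b\<^sup>2 * Y + Q)))"
  proof -
    have "b\<^sup>2 * Y + 4 * Q \<le> 4 * (b\<^sup>2 * Y + Q)" using Y by simp
    then have "2 * s * H * (b\<^sup>2 * Y + 4 * Q) \<le> 2 * s * H * (4 * (b\<^sup>2 * Y + Q))"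
      by (rule mult_left_mono) (use s H in simp)
    then have "2 * s * H * (b\<^sup>2 * Y + 4 * Q) / h ^ 4 \<le> 2 * s * H * (4 * (b\<^sup>2 * Y + Q)) / h ^ 4"
      by (rule divide_right_mono) (use h in simp)
    then show ?thesis by (simp add: field_simps)
  qed
  also have "\<dots> \<le> 4 * (H * L)" using mult_left_mono[OF le H] by linarith
  finally have "(A + B)\<^sup>2 \<le> 4 * (H * L)" .
  then have "A + B \<le> sqrt (4 * (H * L))" by (rule real_le_rsqrt)
  also have "\<dots> = 2 * sqrt (H * L)" by (simp add: real_sqrt_mult)
  finally show ?thesis unfolding A_def B_def .
qed

context carl4 begin

lemma final_ineq:
  "(1 / h\<^sup>2) * sqrt (sinh (2 * \<alpha> * h\<^sup>2 / R\<^sup>2)) * sinh (2 * \<alpha> * h / (R * sqrt d)) * L2l2 d h f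
   + (2 / h\<^sup>2) * sqrt (sinh (2 * \<alpha> * h\<^sup>2 / R\<^sup>2)) * cgrad d h f
   \<le> 2 * L2l2 d h (conj_op d h R \<alpha> \<phi> f)"
  unfolding L2_f cgrad_f L2_L s2_eq[symmetric] Bc_def[symmetric]
  by (rule final_arith[OF s2_pos hpos _ IY_nn IQ_nn _ integral_ineq]) (use Bc_nn hpos in simp_all)

end


lemma box_finite: "finite {j :: nat \<Rightarrow> int. (\<forall>i<d. \<bar>j i\<bar> \<le> N) \<and> (\<forall>i\<ge>d. j i = 0)}"
proof -
  have "{j :: nat \<Rightarrow> int. (\<forall>i<d. \<bar>j i\<bar> \<le> N) \<and> (\<forall>i\<ge>d. j i = 0)} \<subseteq>
      (\<lambda>g i. if i < d then g i else 0) ` (PiE {..<d} (\<lambda>_. {-N..N}))"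
  proof
    fix j :: "nat \<Rightarrow> int" assume j: "j \<in> {j. (\<forall>i<d. \<bar>j i\<bar> \<le> N) \<and> (\<forall>i\<ge>d. j i = 0)}"
    show "j \<in> (\<lambda>g i. if i < d then g i else 0) ` (PiE {..<d} (\<lambda>_. {-N..N}))"
    proof (rule image_eqI[where x="restrict j {..<d}"])
      show "j = (\<lambda>i. if i < d then restrict j {..<d} i else 0)"
        using j by (auto simp: fun_eq_iff)
      show "restrict j {..<d} \<in> PiE {..<d} (\<lambda>_. {-N..N})"
        using j by (auto simp: PiE_def extensional_def abs_le_iff)
    qed
  qed
  moreover have "finite (PiE {..<d} (\<lambda>_. {-N..N}))" by (rule finite_PiE) auto
  ultimately show ?thesis by (meson finite_imageI finite_subset)
qed

lemma pnorm_comp: assumes "i < d"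
  shows "\<bar>h * real_of_int (j i) / R + (if i = 0 then v t else 0)\<bar> \<le> pnorm d h R v j t"
proof -
  have "(h * real_of_int (j i) / R + (if i = 0 then v t else 0))\<^sup>2
      \<le> (\<Sum>i<d. (h * real_of_int (j i) / R + (if i = 0 then v t else 0))\<^sup>2)"
    using assms by (intro member_le_sum) auto
  then have "sqrt ((h * real_of_int (j i) / R + (if i = 0 then v t else 0))\<^sup>2)
      \<le> sqrt (\<Sum>i<d. (h * real_of_int (j i) / R + (if i = 0 then v t else 0))\<^sup>2)"
    by (rule real_sqrt_le_mono)
  then show ?thesis unfolding pnorm_def real_sqrt_abs .
qed

lemma sup_bound: fixes g :: "real \<Rightarrow> real" assumes "continuous_on {0..1} g" "t \<in> {0..1::real}"
  shows "\<bar>g t\<bar> \<le> Sup ((\<lambda>t. \<bar>g t\<bar>) ` {0..1})"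
proof (rule cSup_upper)
  show "\<bar>g t\<bar> \<in> (\<lambda>t. \<bar>g t\<bar>) ` {0..1}" using assms(2) by simp
  have c: "continuous_on {0..1} (\<lambda>t. \<bar>g t\<bar>)" by (rule continuous_on_rabs[OF assms(1)])
  have "compact ((\<lambda>t. \<bar>g t\<bar>) ` {0..1})"
    by (rule compact_continuous_image[OF c]) simp
  then show "bdd_above ((\<lambda>t. \<bar>g t\<bar>) ` {0..1})" by (intro bounded_imp_bdd_above compact_imp_bounded)
qed

lemma inner:
  fixes vphi :: "real \<Rightarrow> real" and d :: nat and cphi :: real
  assumes d1: "1 \<le> d" and sm0: "smooth_fun vphi"
    and cdef: "cphi = 1 / (1 + 2 * ((Sup ((\<lambda>t. \<bar>deriv vphi t\<bar>) ` {0..1}))\<^sup>2 + 4 * \<bar>Sup ((\<lambda>t. \<bar>deriv (deriv vphi) t\<bar>) ` {0..1})\<bar>) + 32 * (\<bar>Sup ((\<lambda>t. \<bar>deriv vphi t\<bar>) ` {0..1})\<bar> + 1)\<^sup>2)"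
  shows "\<forall>h R \<alpha> (f :: (nat \<Rightarrow> int) \<Rightarrow> real \<Rightarrow> real).
            0 < h \<and> h < 1 \<and> R \<ge> 1 \<and> \<alpha> > 0 \<and> h / R < 1 / sqrt d \<and>
            \<alpha> \<le> cphi * (1 / h ^ 4) * sinh (2 * \<alpha> * h\<^sup>2 / R\<^sup>2)
                   * (sinh (2 * \<alpha> * h / (R * sqrt d)))\<^sup>2 \<and>
            ((\<alpha> * h / R \<le> 1 / 10 \<and> \<alpha> \<ge> 1 * R\<^sup>2) \<or>
             (\<alpha> * h / R \<ge> sqrt d / 2 \<and>
              1 \<le> 1 * (1 / (R * h)) * exp ((2 - 1) * \<alpha> * h / (R * sqrt d)))) \<and>
            (\<forall>j. \<exists>f'. continuous_on UNIV f' \<and> (\<forall>t. (f j has_real_derivative f' t) (at t))) \<and>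
            (\<exists>a b. 0 < a \<and> a \<le> b \<and> b < 1 \<and>
               (\<forall>j t. f j t \<noteq> 0 \<longrightarrow> j \<in> lat d \<and> a \<le> t \<and> t \<le> b \<and>
                   1 \<le> pnorm d h R vphi j t \<and> pnorm d h R vphi j t \<le> 4))
          \<longrightarrow>
            (1 / h\<^sup>2) * sqrt (sinh (2 * \<alpha> * h\<^sup>2 / R\<^sup>2)) * sinh (2 * \<alpha> * h / (R * sqrt d))
                * L2l2 d h f
            + (2 / h\<^sup>2) * sqrt (sinh (2 * \<alpha> * h\<^sup>2 / R\<^sup>2)) * cgrad d h f
            \<le> 2 * L2l2 d h (conj_op d h R \<alpha> vphi f)"
proof (intro allI impI)
  fix h R \<alpha> :: real and f :: "(nat \<Rightarrow> int) \<Rightarrow> real \<Rightarrow> real"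
  assume H: "0 < h \<and> h < 1 \<and> R \<ge> 1 \<and> \<alpha> > 0 \<and> h / R < 1 / sqrt d \<and>
            \<alpha> \<le> cphi * (1 / h ^ 4) * sinh (2 * \<alpha> * h\<^sup>2 / R\<^sup>2)
                   * (sinh (2 * \<alpha> * h / (R * sqrt d)))\<^sup>2 \<and>
            ((\<alpha> * h / R \<le> 1 / 10 \<and> \<alpha> \<ge> 1 * R\<^sup>2) \<or>
             (\<alpha> * h / R \<ge> sqrt d / 2 \<and>
              1 \<le> 1 * (1 / (R * h)) * exp ((2 - 1) * \<alpha> * h / (R * sqrt d)))) \<and>
            (\<forall>j. \<exists>f'. continuous_on UNIV f' \<and> (\<forall>t. (f j has_real_derivative f' t) (at t))) \<and>
            (\<exists>a b. 0 < a \<and> a \<le> b \<and> b < 1 \<and>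
               (\<forall>j t. f j t \<noteq> 0 \<longrightarrow> j \<in> lat d \<and> a \<le> t \<and> t \<le> b \<and>
                   1 \<le> pnorm d h R vphi j t \<and> pnorm d h R vphi j t \<le> 4))"
  have sm: "\<And>n x. ((deriv ^^ n) vphi) differentiable (at x)" using sm0 by (simp add: smooth_fun_def)
  have der1: "\<And>t. (vphi has_real_derivative deriv vphi t) (at t)"
    using sm[of 0] by (simp add: DERIV_deriv_iff_real_differentiable)
  have der2: "\<And>t. (deriv vphi has_real_derivative deriv (deriv vphi) t) (at t)"
    using sm[of 1] by (simp add: DERIV_deriv_iff_real_differentiable)
  have der3: "\<And>t. (deriv (deriv vphi) has_real_derivative deriv (deriv (deriv vphi)) t) (at t)"
    using sm[of 2] by (simp add: DERIV_deriv_iff_real_differentiable numeral_2_eq_2)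
  have cont: "continuous_on {0..1} g" if "\<And>t. (g has_real_derivative g' t) (at t)" for g g'
    by (rule continuous_at_imp_continuous_on) (use that DERIV_isCont in blast)
  define P1 where "P1 = Sup ((\<lambda>t. \<bar>deriv vphi t\<bar>) ` {0..1})"
  define P2 where "P2 = Sup ((\<lambda>t. \<bar>deriv (deriv vphi) t\<bar>) ` {0..1})"
  define M where "M = Sup ((\<lambda>t. \<bar>vphi t\<bar>) ` {0..1})"
  have P1b: "\<And>t. 0 \<le> t \<Longrightarrow> t \<le> 1 \<Longrightarrow> \<bar>deriv vphi t\<bar> \<le> P1"
    unfolding P1_def by (rule sup_bound[OF cont[OF der2]]) simp
  have P2b: "\<And>t. 0 \<le> t \<Longrightarrow> t \<le> 1 \<Longrightarrow> \<bar>deriv (deriv vphi) t\<bar> \<le> P2"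
    unfolding P2_def by (rule sup_bound[OF cont[OF der3]]) simp
  have Mb: "\<And>t. 0 \<le> t \<Longrightarrow> t \<le> 1 \<Longrightarrow> \<bar>vphi t\<bar> \<le> M"
    unfolding M_def by (rule sup_bound[OF cont[OF der1]]) simp
  have P1nn: "0 \<le> P1" using P1b[of 0] by simp
  have P2nn: "0 \<le> P2" using P2b[of 0] by simp
  have cphi': "cphi = 1 / (1 + 2 * (P1\<^sup>2 + 4 * P2) + 32 * (P1 + 1)\<^sup>2)"
    using cdef P1nn P2nn unfolding P1_def[symmetric] P2_def[symmetric] by simp
  have cphi_pos: "0 < cphi" unfolding cphi' using P1nn P2nn by (simp add: add_pos_nonneg)
  have cphi_small: "cphi * (2 * (P1\<^sup>2 + 4 * P2) + 32 * (P1 + 1)\<^sup>2) \<le> 1"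
    unfolding cphi' using P1nn P2nn by (simp add: field_simps add_pos_nonneg)
  have hpos: "0 < h" using H by blast
  have R1: "1 \<le> R" using H by blast
  have apos: "0 < \<alpha>" using H by blast
  have acond: "\<alpha> \<le> cphi * (1 / h ^ 4) * sinh (2 * \<alpha> * h\<^sup>2 / R\<^sup>2)
           * (sinh (2 * \<alpha> * h / (R * sqrt d)))\<^sup>2" using H by blast
  have fder: "\<forall>j. \<exists>f'. continuous_on UNIV f' \<and> (\<forall>t. (f j has_real_derivative f' t) (at t))"
    using H by blast
  obtain a b where ab: "0 < a" "a \<le> b" "b < 1" and
    sp: "\<And>j t. f j t \<noteq> 0 \<Longrightarrow> j \<in> lat d \<and> a \<le> t \<and> t \<le> b \<and>
           1 \<le> pnorm d h R vphi j t \<and> pnorm d h R vphi j t \<le> 4"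
    using H by blast
  define fd where "fd j = (SOME f'. continuous_on UNIV f' \<and> (\<forall>t. (f j has_real_derivative f' t) (at t)))" for j
  have fdp: "continuous_on UNIV (fd j) \<and> (\<forall>t. (f j has_real_derivative fd j t) (at t))" for j
    unfolding fd_def by (rule someI_ex[OF spec[OF fder, of j]])
  have f_der: "\<And>j t. (f j has_real_derivative fd j t) (at t)" using fdp by blast
  have fd_cont: "\<And>j. continuous_on UNIV (fd j)" using fdp by blast
  have f0: "\<And>j. f j 0 = 0" using sp ab by force
  have f1: "\<And>j. f j 1 = 0" using sp ab by force
  have supp: "\<And>j t. f j t \<noteq> 0 \<Longrightarrow> 0 \<le> t \<and> t \<le> 1 \<and> 1 \<le> pnorm d h R vphi j t \<and> pnorm d h R vphi j t \<le> 4"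
    using sp ab by force
  have latf: "\<And>j t. f j t \<noteq> 0 \<Longrightarrow> j \<in> lat d" using sp by blast
  define N where "N = \<lceil>(4 + M) * R / h\<rceil>"
  have U_fin: "finite {j. \<exists>t. f j t \<noteq> 0}"
  proof (rule finite_subset[OF _ box_finite[of d N]], rule subsetI)
    fix j assume "j \<in> {j. \<exists>t. f j t \<noteq> 0}"
    then obtain t where ft: "f j t \<noteq> 0" by auto
    have jl: "j \<in> lat d" using latf[OF ft] .
    have t01: "0 \<le> t" "t \<le> 1" using supp[OF ft] by auto
    have pn: "pnorm d h R vphi j t \<le> 4" using supp[OF ft] by auto
    have "\<bar>j i\<bar> \<le> N" if i: "i < d" for i
    proof -
      have c: "\<bar>h * real_of_int (j i) / R + (if i = 0 then vphi t else 0)\<bar> \<le> 4"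
        using pnorm_comp[OF i, of h j R vphi t] pn by linarith
      have "\<bar>(if i = 0 then vphi t else 0)\<bar> \<le> M" using Mb[OF t01] Mb[of 0] by auto
      then have "\<bar>h * real_of_int (j i) / R\<bar> \<le> 4 + M" using c by linarith
      then have "h * \<bar>real_of_int (j i)\<bar> / R \<le> 4 + M" using hpos R1 by (simp add: abs_mult)
      then have "\<bar>real_of_int (j i)\<bar> \<le> (4 + M) * R / h" using hpos R1 by (simp add: field_simps)
      also have "\<dots> \<le> real_of_int N" unfolding N_def by (rule le_of_int_ceiling)
      finally show ?thesis by linarith
    qed
    then show "j \<in> {j. (\<forall>i<d. \<bar>j i\<bar> \<le> N) \<and> (\<forall>i\<ge>d. j i = 0)}" using jl by (simp add: lat_def)
  qed
  have Rpos: "0 < R" using R1 by simp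
  interpret X: carl4 d h R \<alpha> vphi "deriv vphi" "deriv (deriv vphi)" f fd P1 P2 cphi
    by unfold_locales (fact d1 hpos Rpos apos der1 der2 f_der fd_cont U_fin f0 f1 supp P1b P2b
        P1nn P2nn cphi_pos cphi_small acond latf)+
  show "(1 / h\<^sup>2) * sqrt (sinh (2 * \<alpha> * h\<^sup>2 / R\<^sup>2)) * sinh (2 * \<alpha> * h / (R * sqrt d)) * L2l2 d h f
      + (2 / h\<^sup>2) * sqrt (sinh (2 * \<alpha> * h\<^sup>2 / R\<^sup>2)) * cgrad d h f
      \<le> 2 * L2l2 d h (conj_op d h R \<alpha> vphi f)" by (rule X.final_ineq)
qed

theorem theorem4p1:
  shows "\<exists>\<epsilon>>0. \<forall>d::nat. d \<ge> 1 \<longrightarrow>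
    (\<exists>cfun :: real \<Rightarrow> real \<Rightarrow> real. (\<forall>a b. cfun a b > 0) \<and>
     (\<forall>vphi :: real \<Rightarrow> real.
        smooth_fun vphi \<and> (\<forall>t\<in>{0..1}. vphi t \<ge> 0) \<and>
        (\<exists>a b. 0 < a \<and> a \<le> b \<and> b < 1 \<and> (\<forall>t. vphi t \<noteq> 0 \<longrightarrow> a \<le> t \<and> t \<le> b))
      \<longrightarrow>
      (let c\<^sub>\<phi> = cfun (Sup ((\<lambda>t. \<bar>deriv vphi t\<bar>) ` {0..1}))
                        (Sup ((\<lambda>t. \<bar>deriv (deriv vphi) t\<bar>) ` {0..1}))
       in \<exists>c>0. \<exists>C'>0. \<exists>h0>0. \<exists>C>1.
          \<forall>h R \<alpha> (f :: (nat \<Rightarrow> int) \<Rightarrow> real \<Rightarrow> real).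
            0 < h \<and> h < h0 \<and> R \<ge> 1 \<and> \<alpha> > 0 \<and> h / R < \<epsilon> / sqrt d \<and>
            \<alpha> \<le> c\<^sub>\<phi> * (1 / h ^ 4) * sinh (2 * \<alpha> * h\<^sup>2 / R\<^sup>2)
                   * (sinh (2 * \<alpha> * h / (R * sqrt d)))\<^sup>2 \<and>
            ((\<alpha> * h / R \<le> 1 / 10 \<and> \<alpha> \<ge> c * R\<^sup>2) \<or>
             (\<alpha> * h / R \<ge> sqrt d / 2 \<and>
              1 \<le> C' * (1 / (R * h)) * exp ((2 - \<epsilon>) * \<alpha> * h / (R * sqrt d)))) \<and>
            (\<forall>j. \<exists>f'. continuous_on UNIV f' \<and> (\<forall>t. (f j has_real_derivative f' t) (at t))) \<and>
            (\<exists>a b. 0 < a \<and> a \<le> b \<and> b < 1 \<and>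
               (\<forall>j t. f j t \<noteq> 0 \<longrightarrow> j \<in> lat d \<and> a \<le> t \<and> t \<le> b \<and>
                   1 \<le> pnorm d h R vphi j t \<and> pnorm d h R vphi j t \<le> 4))
          \<longrightarrow>
            (1 / h\<^sup>2) * sqrt (sinh (2 * \<alpha> * h\<^sup>2 / R\<^sup>2)) * sinh (2 * \<alpha> * h / (R * sqrt d))
                * L2l2 d h f
            + (2 / h\<^sup>2) * sqrt (sinh (2 * \<alpha> * h\<^sup>2 / R\<^sup>2)) * cgrad d h f
            \<le> C * L2l2 d h (conj_op d h R \<alpha> vphi f))))"
proof -
  define cfun :: "real \<Rightarrow> real \<Rightarrow> real" where
    "cfun a b = 1 / (1 + 2 * (a\<^sup>2 + 4 * \<bar>b\<bar>) + 32 * (\<bar>a\<bar> + 1)\<^sup>2)" for a b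
  have cpos: "0 < cfun a b" for a b unfolding cfun_def by (simp add: add_pos_nonneg)
  show ?thesis
    apply (rule exI[where x="1::real"])
    apply (intro conjI allI impI)
     apply simp
    apply (rule exI[where x=cfun])
    apply (intro conjI allI impI)
     apply (rule cpos)
    apply (unfold Let_def)
    apply (rule exI[where x="1::real"], rule conjI, rule zero_less_one)
    apply (rule exI[where x="1::real"], rule conjI, rule zero_less_one)
    apply (rule exI[where x="1::real"], rule conjI, rule zero_less_one)
    apply (rule exI[where x="2::real"], rule conjI, simp)
    apply (rule inner)
    subgoal by assumption
    subgoal by blast
    subgoal by (simp add: cfun_def)
    done
qed


end
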